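(* Consider the family of load balancing systems described in the context, indexed by $\epsilon\in(0,\mu_\Sigma)$, operated under a throughput-optimal load balancing policy. Suppose there exist $\epsilon_0>0$, a function $g:(0,\epsilon_0)\to[0,\infty)$ and a constant $C<\infty$ such that for all $\epsilon\in(0,\epsilon_0)$, $$\mathbb E\Big[\big\|\overline{\mathbf Q}^{(\epsilon)}(t+1)\big\|_1\,\big\|\overline{\mathbf U}^{(\epsilon)}(t)\big\|_1\Big]\le C g(\epsilon).$$ Let $Z^{(\epsilon)}$ be exponential with mean $\frac{(\sigma_\Sigma^{(\epsilon)})^2+\nu_\Sigma^2}{2}$. Then there exists a constant $C'<\infty$, independent of $\epsilon$, such that for all $\epsilon\in(0,\epsilon_0)$, $$d_W\Big(\epsilon\sum_{n=1}^N \overline Q_n^{(\epsilon)},\,Z^{(\epsilon)}\Big)\le C'\max\big(g(\epsilon),\epsilon\big).$$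
   Context: Wasserstein distance: for real-valued random variables $X,Y$, $d_W(X,Y)=\sup_{h\in \mathrm{Lip}(1)}|\mathbb E[h(X)]-\mathbb E[h(Y)]|$, where $\mathrm{Lip}(1)$ is the set of functions $h:\mathbb R\to\mathbb R$ with $|h(x)-h(y)|\le|x-y|$. Load balancing system: time is slotted; there are $N\ge1$ servers, each with an infinite FIFO queue. In slot $t$, $A_\Sigma(t)$ exogenous tasks arrive; a dispatcher, observing the queue lengths (possibly with randomization), routes them so that queue $n$ receives $A_n(t)\ge0$ tasks with $\sum_n A_n(t)=A_\Sigma(t)$. Server $n$ offers service $S_n(t)$. Queue dynamics: $Q_n(t+1)=Q_n(t)+A_n(t)-S_n(t)+U_n(t)$ with $U_n(t)=\max(S_n(t)-A_n(t)-Q_n(t),0)$. $\{A_\Sigma(t)\}$ is i.i.d. over time, nonnegative integer-valued, with $\mathbb P(A_\Sigma(t)=0)>0$; each $\{S_n(t)\}$ is i.i.d. over time, nonnegative integer-valued with mean $\mu_n$; services are independent across servers and of the arrivals. $S_\Sigma(t)=\sum_n S_n(t)$ has mean $\mu_\Sigma=\sum_n\mu_n$ and variance $\nu_\Sigma^2$. For each $\epsilon$, $A_\Sigma$ has mean $\lambda_\Sigma^{(\epsilon)}=\mu_\Sigma-\epsilon$ and variance $(\sigma_\Sigma^{(\epsilon)})^2$. There are constants $A_{max},S_{max}$ independent of $\epsilon$ with $A_\Sigma(t)\le A_{max}$, $S_n(t)\le S_{max}$, and a constant $c_0>0$ with $(\sigma_\Sigma^{(\epsilon)})^2+\nu_\Sigma^2\ge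 c_0$ for all $\epsilon$. A policy is throughput optimal if for every $\epsilon$ the queue-length Markov chain is positive recurrent and all moments of $\|\overline{\mathbf Q}^{(\epsilon)}\|$ are finite. Steady-state notation: $\overline{\mathbf Q}^{(\epsilon)}=\overline{\mathbf Q}^{(\epsilon)}(t)$ is distributed according to the stationary distribution; $\overline{\mathbf A}(t),\overline{\mathbf S}(t),\overline{\mathbf U}^{(\epsilon)}(t)$ and $\overline{\mathbf Q}^{(\epsilon)}(t+1)$ denote the arrival, service, unused service and next queue-length vectors generated in one slot starting from $\overline{\mathbf Q}^{(\epsilon)}(t)$. $\|\cdot\|_1$ is the $\ell_1$ norm. *)

theory Defs
  imports "HOL-Analysis.Analysis" "HOL-Probability.Probability"
begin

text \<open>Queue-length vectors are functions nat => nat; only indices n < N are used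
  (components n >= N are kept at 0 by the dynamics).\<close>

type_synonym qvec = "nat \<Rightarrow> nat"

definition wasserstein :: "real measure \<Rightarrow> real measure \<Rightarrow> ereal" where
  "wasserstein M M' =
     (SUP h \<in> {h :: real \<Rightarrow> real. lipschitz_on 1 UNIV h}.
        ereal \<bar>(\<integral>x. h x \<partial>M) - (\<integral>x. h x \<partial>M')\<bar>)"

text \<open>One slot starting from queue vector q: total arrivals a ~ arr, routing vector
  x ~ policy q a, independent services s ~ product of serv n (n < N).\<close>
definition lb_slot ::
  "nat \<Rightarrow> nat pmf \<Rightarrow> (qvec \<Rightarrow> nat \<Rightarrow> qvec pmf) \<Rightarrow> (nat \<Rightarrow> nat pmf) \<Rightarrow> qvec
    \<Rightarrow> (qvec \<times> qvec) pmf" where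
  "lb_slot N arr policy serv q =
     bind_pmf arr (\<lambda>a. bind_pmf (policy q a) (\<lambda>x.
       bind_pmf (Pi_pmf {..<N} 0 serv) (\<lambda>s. return_pmf (x, s))))"

text \<open>Q_n(t+1) = Q_n + A_n - S_n + U_n = max(Q_n + A_n - S_n, 0) (truncated nat subtraction).\<close>
definition next_queue :: "nat \<Rightarrow> qvec \<Rightarrow> qvec \<Rightarrow> qvec \<Rightarrow> qvec" where
  "next_queue N q x s = (\<lambda>n. if n < N then q n + x n - s n else 0)"

definition unused :: "nat \<Rightarrow> qvec \<Rightarrow> qvec \<Rightarrow> qvec \<Rightarrow> qvec" where
  "unused N q x s = (\<lambda>n. if n < N then s n - (x n + q n) else 0)"

definition lb_kernel ::
  "nat \<Rightarrow> nat pmf \<Rightarrow> (qvec \<Rightarrow> nat \<Rightarrow> qvec pmf) \<Rightarrow> (nat \<Rightarrow> nat pmf) \<Rightarrow> qvec \<Rightarrow> qvec pmf" where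
  "lb_kernel N arr policy serv q =
     map_pmf (\<lambda>(x, s). next_queue N q x s) (lb_slot N arr policy serv q)"

definition stationary ::
  "nat \<Rightarrow> nat pmf \<Rightarrow> (qvec \<Rightarrow> nat \<Rightarrow> qvec pmf) \<Rightarrow> (nat \<Rightarrow> nat pmf) \<Rightarrow> qvec pmf \<Rightarrow> bool" where
  "stationary N arr policy serv p \<longleftrightarrow> bind_pmf p (lb_kernel N arr policy serv) = p"

definition steady_joint ::
  "nat \<Rightarrow> nat pmf \<Rightarrow> (qvec \<Rightarrow> nat \<Rightarrow> qvec pmf) \<Rightarrow> (nat \<Rightarrow> nat pmf) \<Rightarrow> qvec pmf
    \<Rightarrow> (qvec \<times> qvec \<times> qvec) pmf" where
  "steady_joint N arr policy serv p =
     bind_pmf p (\<lambda>q. map_pmf (\<lambda>(x, s). (q, x, s)) (lb_slot N arr policy serv q))"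

definition l1 :: "nat \<Rightarrow> qvec \<Rightarrow> real" where
  "l1 N v = real (\<Sum>n<N. v n)"

end

theory Submission
  imports Defs
begin

lemma deriv_bound_interval:
  fixes f f' :: "real \<Rightarrow> real"
  assumes ab: "a \<le> b" and cont: "continuous_on {a..b} f"
    and der: "\<And>t. a < t \<Longrightarrow> t < b \<Longrightarrow> (f has_real_derivative f' t) (at t)"
    and bd: "\<And>t. a < t \<Longrightarrow> t < b \<Longrightarrow> \<bar>f' t\<bar> \<le> B"
  shows "\<bar>f b - f a\<bar> \<le> B * (b - a)"
proof (cases "a = b")
  case True then show ?thesis by simp
next
  case False
  then have lt: "a < b" using ab by simp
  obtain l z where z: "a < z" "z < b" "DERIV f z :> l" "f b - f a = (b - a) * l"
    using MVT[OF lt cont] der real_differentiable_def by blast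
  have "l = f' z" using DERIV_unique[OF z(3) der[OF z(1,2)]] .
  then have "\<bar>l\<bar> \<le> B" using bd z by simp
  then show ?thesis using z(4) lt by (simp add: abs_mult mult.commute mult_right_mono)
qed

lemma deriv_bound_sym:
  fixes f f' :: "real \<Rightarrow> real"
  assumes cont: "\<And>b. continuous_on {lo..b} f"
    and der: "\<And>t. lo < t \<Longrightarrow> (f has_real_derivative f' t) (at t)"
    and x: "lo \<le> x" and y: "lo \<le> y"
    and bd: "\<And>t. min x y < t \<Longrightarrow> t < max x y \<Longrightarrow> \<bar>f' t\<bar> \<le> B"
  shows "\<bar>f y - f x\<bar> \<le> B * \<bar>y - x\<bar>"
proof -
  have c: "continuous_on {min x y..max x y} f"
    by (rule continuous_on_subset[OF cont[of "max x y"]]) (use x y in auto)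
  have "\<bar>f (max x y) - f (min x y)\<bar> \<le> B * (max x y - min x y)"
    by (rule deriv_bound_interval[OF _ c]) (use x y der bd in auto)
  then show ?thesis by (cases "x \<le> y") (auto simp: abs_minus_commute max_def min_def)
qed

definition expM :: "real \<Rightarrow> real measure" where
  "expM l = density lborel (exponential_density l)"

lemma expM_prob: "0 < l \<Longrightarrow> prob_space (expM l)"
  unfolding expM_def by (rule prob_space_exponential_density)

lemma expM_sets[simp]: "sets (expM l) = sets borel"
  unfolding expM_def by simp

lemma expM_distributed: "0 < l \<Longrightarrow> distributed (expM l) lborel (\<lambda>x. x) (exponential_density l)"
  unfolding distributed_def expM_def
  by (auto simp: exponential_density_def distr_id2 intro!: AE_I2)

lemma expM_AE_nonneg: "0 < l \<Longrightarrow> AE t in expM l. 0 \<le> t"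
  unfolding expM_def
  by (subst AE_density) (auto simp: exponential_density_def intro!: AE_I2)

lemma expM_int_id: assumes l: "0 < l" shows "integrable (expM l) (\<lambda>t. t)"
proof -
  interpret prob_space "expM l" by (rule expM_prob[OF l])
  show ?thesis using erlang_ith_moment_integrable[OF l expM_distributed[OF l], of 1] by simp
qed

lemma expM_mean: assumes l: "0 < l" shows "(\<integral>t. t \<partial>expM l) = 1 / l"
proof -
  interpret prob_space "expM l" by (rule expM_prob[OF l])
  show ?thesis using exponential_distributed_expectation[OF l expM_distributed[OF l]] by simp
qed

definition phi :: "real \<Rightarrow> (real \<Rightarrow> real) \<Rightarrow> real \<Rightarrow> real" where
  "phi l h x = (\<integral>t. h (x + t) \<partial>expM l)"

definition Eh :: "real \<Rightarrow> (real \<Rightarrow> real) \<Rightarrow> real" where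
  "Eh l h = (\<integral>t. h t \<partial>expM l)"

lemma phi0: "phi l h 0 = Eh l h" by (simp add: phi_def Eh_def)

lemma lip_abs: fixes h :: "real \<Rightarrow> real" shows "lipschitz_on 1 UNIV h \<Longrightarrow> \<bar>h x - h y\<bar> \<le> \<bar>x - y\<bar>"
  using lipschitz_onD[of 1 UNIV h x y] unfolding dist_real_def by simp

lemma lip_cont: fixes h :: "real \<Rightarrow> real" shows "lipschitz_on 1 UNIV h \<Longrightarrow> continuous_on UNIV h"
  by (rule lipschitz_on_continuous_on)

lemma lip_meas: fixes h :: "real \<Rightarrow> real" shows "lipschitz_on 1 UNIV h \<Longrightarrow> h \<in> borel_measurable borel"
  using lip_cont borel_measurable_continuous_onI by blast

lemma expM_meas: "f \<in> borel_measurable borel \<Longrightarrow> f \<in> borel_measurable (expM l)"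
  using measurable_cong_sets[OF expM_sets refl] by blast

lemma int_abs_id: "0 < l \<Longrightarrow> integrable (expM l) (\<lambda>t. \<bar>t\<bar>)"
  using expM_int_id by (rule integrable_abs)

lemma abs_mean: "0 < l \<Longrightarrow> (\<integral>t. \<bar>t\<bar> \<partial>expM l) = 1 / l"
proof -
  assume l: "0 < l"
  have "(\<integral>t. \<bar>t\<bar> \<partial>expM l) = (\<integral>t. t \<partial>expM l)"
    by (rule integral_cong_AE) (use expM_AE_nonneg[OF l] in \<open>auto intro!: expM_meas\<close>)
  then show ?thesis using expM_mean[OF l] by simp
qed

lemma int_shift:
  fixes h :: "real \<Rightarrow> real"
  assumes l: "0 < l" and h: "lipschitz_on 1 UNIV h"
  shows "integrable (expM l) (\<lambda>t. h (x + t))"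
proof -
  interpret prob_space "expM l" by (rule expM_prob[OF l])
  show ?thesis
proof (rule Bochner_Integration.integrable_bound)
  show "integrable (expM l) (\<lambda>t. \<bar>h 0\<bar> + \<bar>x\<bar> + \<bar>t\<bar>)"
    using int_abs_id[OF l] by simp
  show "(\<lambda>t. h (x + t)) \<in> borel_measurable (expM l)"
    using lip_meas[OF h] by (intro expM_meas) simp
  show "AE t in expM l. norm (h (x + t)) \<le> norm (\<bar>h 0\<bar> + \<bar>x\<bar> + \<bar>t\<bar>)"
  proof (rule AE_I2)
    fix t
    have "\<bar>h (x + t) - h 0\<bar> \<le> \<bar>x + t - 0\<bar>" by (rule lip_abs[OF h])
    then show "norm (h (x + t)) \<le> norm (\<bar>h 0\<bar> + \<bar>x\<bar> + \<bar>t\<bar>)" by simp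
  qed
qed
qed

lemma int_h:
  fixes h :: "real \<Rightarrow> real"
  assumes l: "0 < l" and h: "lipschitz_on 1 UNIV h"
  shows "integrable (expM l) h"
  using int_shift[OF l h, of 0] by simp

lemma phi_lip:
  fixes h :: "real \<Rightarrow> real"
  assumes l: "0 < l" and h: "lipschitz_on 1 UNIV h"
  shows "\<bar>phi l h x - phi l h y\<bar> \<le> \<bar>x - y\<bar>"
proof -
  interpret prob_space "expM l" by (rule expM_prob[OF l])
  have "phi l h x - phi l h y = (\<integral>t. h (x + t) - h (y + t) \<partial>expM l)"
    unfolding phi_def using int_shift[OF l h] by simp
  also have "\<bar>\<dots>\<bar> \<le> (\<integral>t. \<bar>x - y\<bar> \<partial>expM l)"
  proof (rule integral_abs_bound_integral)
    show "integrable (expM l) (\<lambda>t. h (x + t) - h (y + t))" using int_shift[OF l h] by simp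
    fix t show "\<bar>h (x + t) - h (y + t)\<bar> \<le> \<bar>x - y\<bar>" using lip_abs[OF h, of "x + t" "y + t"] by simp
  qed simp
  finally show ?thesis by (simp add: prob_space)
qed

lemma h_phi:
  fixes h :: "real \<Rightarrow> real"
  assumes l: "0 < l" and h: "lipschitz_on 1 UNIV h"
  shows "\<bar>h x - phi l h x\<bar> \<le> 1 / l"
proof -
  interpret prob_space "expM l" by (rule expM_prob[OF l])
  have "h x - phi l h x = (\<integral>t. h x - h (x + t) \<partial>expM l)"
    unfolding phi_def using int_shift[OF l h] by (simp add: prob_space)
  also have "\<bar>\<dots>\<bar> \<le> (\<integral>t. \<bar>t\<bar> \<partial>expM l)"
  proof (rule integral_abs_bound_integral)
    show "integrable (expM l) (\<lambda>t. h x - h (x + t))" using int_shift[OF l h] by simp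
    show "integrable (expM l) (\<lambda>t. \<bar>t\<bar>)" by (rule int_abs_id[OF l])
    fix t show "\<bar>h x - h (x + t)\<bar> \<le> \<bar>t\<bar>" using lip_abs[OF h, of x "x + t"] by simp
  qed
  finally show ?thesis using abs_mean[OF l] by simp
qed

definition kk :: "real \<Rightarrow> (real \<Rightarrow> real) \<Rightarrow> real \<Rightarrow> real" where
  "kk l h y = l * exp (- y * l) * h y"

lemma kk_cont: fixes h :: "real \<Rightarrow> real" shows "lipschitz_on 1 UNIV h \<Longrightarrow> continuous_on S (kk l h)"
  unfolding kk_def using lip_cont[of h]
  by (auto intro!: continuous_intros intro: continuous_on_subset)

lemma memoryless:
  fixes h :: "real \<Rightarrow> real"
  assumes l: "0 < l" and h: "lipschitz_on 1 UNIV h" and x: "0 \<le> x"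
  shows "phi l h x = exp (l * x) * (Eh l h - integral {0..x} (kk l h))"
proof -
  note hm[measurable] = lip_meas[OF h]
  let ?e = "exponential_density l"
  have em[measurable]: "?e \<in> borel_measurable borel" by simp
  have "phi l h x = (\<integral>t. ?e t * h (x + t) \<partial>lborel)"
    unfolding phi_def expM_def
    by (subst integral_density) (use l in \<open>auto simp: exponential_density_def intro!: AE_I2\<close>)
  also have "\<dots> = (\<integral>y. ?e (y - x) * h y \<partial>lborel)"
    by (subst lborel_integral_real_affine[where c=1 and t=x]) (auto simp: algebra_simps)
  also have "\<dots> = (\<integral>y. exp (l * x) * (indicator {x..} y * kk l h y) \<partial>lborel)"
  proof (rule Bochner_Integration.integral_cong)
    fix y
    have ee: "exp ((x - y) * l) = exp (l * x) * exp (- (y * l))"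
    proof -
      have "(x - y) * l = l * x + (- (y * l))" by (simp add: algebra_simps)
      then show ?thesis by (simp only: exp_add)
    qed
    show "?e (y - x) * h y = exp (l * x) * (indicator {x..} y * kk l h y)"
      by (cases "y < x") (simp_all add: exponential_density_def kk_def indicator_def ee)
  qed simp
  also have "\<dots> = exp (l * x) * (\<integral>y. indicator {x..} y * kk l h y \<partial>lborel)"
    by simp
  finally have p1: "phi l h x = exp (l * x) * (\<integral>y. indicator {x..} y * kk l h y \<partial>lborel)" .
  have "Eh l h = (\<integral>t. ?e t * h t \<partial>lborel)"
    unfolding Eh_def expM_def
    by (subst integral_density) (use l in \<open>auto simp: exponential_density_def intro!: AE_I2\<close>)
  also have "\<dots> = (\<integral>y. indicator {0..} y * kk l h y \<partial>lborel)"
    by (rule Bochner_Integration.integral_cong) (auto simp: exponential_density_def kk_def indicator_def)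
  finally have e1: "Eh l h = (\<integral>y. indicator {0..} y * kk l h y \<partial>lborel)" .
  have i0: "integrable lborel (\<lambda>y. indicator {0..} y * kk l h y)"
  proof -
    have "integrable (expM l) h" by (rule int_h[OF l h])
    then have "integrable lborel (\<lambda>y. ?e y *\<^sub>R h y)"
      unfolding expM_def by (subst (asm) integrable_density) (use l in \<open>auto simp: exponential_density_def intro!: AE_I2\<close>)
    also have "(\<lambda>y. ?e y *\<^sub>R h y) = (\<lambda>y. indicator {0..} y * kk l h y)"
      by (auto simp: exponential_density_def kk_def indicator_def fun_eq_iff)
    finally show ?thesis .
  qed
  have km[measurable]: "kk l h \<in> borel_measurable borel" unfolding kk_def by measurable
  have i1: "integrable lborel (\<lambda>y. indicator {0..x} y * kk l h y)"
    by (rule Bochner_Integration.integrable_bound[OF i0]) (auto simp: indicator_def intro!: AE_I2)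
  have i2: "integrable lborel (\<lambda>y. indicator {x..} y * kk l h y)"
    by (rule Bochner_Integration.integrable_bound[OF i0]) (use x in \<open>auto simp: indicator_def intro!: AE_I2\<close>)
  have "(\<integral>y. indicator {0..} y * kk l h y \<partial>lborel) =
        (\<integral>y. indicator {0..x} y * kk l h y + indicator {x..} y * kk l h y \<partial>lborel)"
    by (rule integral_cong_AE)
       (use x in \<open>auto simp: indicator_def intro!: eventually_mono[OF AE_lborel_singleton[of x]]\<close>)
  also have "\<dots> = (\<integral>y. indicator {0..x} y * kk l h y \<partial>lborel) + (\<integral>y. indicator {x..} y * kk l h y \<partial>lborel)"
    using i1 i2 by simp
  finally have split: "Eh l h = (\<integral>y. indicator {0..x} y * kk l h y \<partial>lborel) + (\<integral>y. indicator {x..} y * kk l h y \<partial>lborel)"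
    using e1 by simp
  have "(\<integral>y. indicator {0..x} y * kk l h y \<partial>lborel) = integral {0..x} (kk l h)"
  proof -
    have si: "set_integrable lborel {0..x} (kk l h)" unfolding set_integrable_def using i1 by simp
    show ?thesis using set_borel_integral_eq_integral(2)[OF si] unfolding set_lebesgue_integral_def by simp
  qed
  then show ?thesis using p1 split by simp
qed

lemma I_deriv:
  fixes h :: "real \<Rightarrow> real"
  assumes h: "lipschitz_on 1 UNIV h" and x: "0 < x"
  shows "((\<lambda>y. integral {0..y} (kk l h)) has_real_derivative kk l h x) (at x)"
proof -
  have "((\<lambda>y. integral {0..y} (kk l h)) has_real_derivative kk l h x) (at x within {0..x+1})"
    by (rule integral_has_real_derivative) (use x kk_cont[OF h] in auto)
  moreover have "at x within {0..x+1} = at x"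
    by (rule at_within_interior) (use x in simp)
  ultimately show ?thesis by simp
qed

lemma phi_deriv:
  fixes h :: "real \<Rightarrow> real"
  assumes l: "0 < l" and h: "lipschitz_on 1 UNIV h" and x: "0 < x"
  shows "(phi l h has_real_derivative (l * phi l h x - l * h x)) (at x)"
proof -
  let ?I = "\<lambda>y. integral {0..y} (kk l h)"
  have d1: "((\<lambda>y. exp (l * y)) has_real_derivative l * exp (l * x)) (at x)"
    by (auto intro!: derivative_eq_intros)
  have d2: "((\<lambda>y. Eh l h - ?I y) has_real_derivative 0 - kk l h x) (at x)"
    by (intro DERIV_diff DERIV_const I_deriv[OF h x])
  have d: "((\<lambda>y. exp (l * y) * (Eh l h - ?I y)) has_real_derivative
            (l * exp (l * x)) * (Eh l h - ?I x) + (0 - kk l h x) * exp (l * x)) (at x)"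
    by (rule DERIV_mult[OF d1 d2])
  have eq: "(l * exp (l * x)) * (Eh l h - ?I x) + (0 - kk l h x) * exp (l * x) = l * phi l h x - l * h x"
  proof -
    have e: "exp (- x * l) * exp (l * x) = 1" by (simp add: exp_add[symmetric])
    have p: "phi l h x = exp (l * x) * (Eh l h - ?I x)" using memoryless[OF l h, of x] x by simp
    have "(l * exp (l * x)) * (Eh l h - ?I x) + (0 - kk l h x) * exp (l * x)
        = l * (exp (l * x) * (Eh l h - ?I x)) - l * h x * (exp (- x * l) * exp (l * x))"
      unfolding kk_def by (simp add: algebra_simps)
    then show ?thesis using e p by simp
  qed
  show ?thesis
    by (rule has_field_derivative_transform_within_open[OF d[unfolded eq], of "{0<..}"])
       (use x memoryless[OF l h] in auto)
qed

definition sg :: "real \<Rightarrow> (real \<Rightarrow> real) \<Rightarrow> real \<Rightarrow> real" where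
  "sg l h x = Eh l h - phi l h x"
definition sg' :: "real \<Rightarrow> (real \<Rightarrow> real) \<Rightarrow> real \<Rightarrow> real" where
  "sg' l h x = l * (h x - phi l h x)"
definition sF :: "real \<Rightarrow> (real \<Rightarrow> real) \<Rightarrow> real \<Rightarrow> real" where
  "sF l h x = integral {0..x} (sg l h)"

context
  fixes l :: real and h :: "real \<Rightarrow> real"
  assumes l: "0 < l" and h: "lipschitz_on 1 UNIV h"
begin

lemma sg0: "sg l h 0 = 0" by (simp add: sg_def phi0)

lemma sg_lip: "\<bar>sg l h x - sg l h y\<bar> \<le> \<bar>x - y\<bar>"
  using phi_lip[OF l h, of y x] by (simp add: sg_def abs_minus_commute)

lemma sg_cont: "continuous_on S (sg l h)"
proof -
  have "lipschitz_on 1 UNIV (sg l h)"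
    by (rule lipschitz_onI) (use sg_lip in \<open>auto simp: dist_real_def\<close>)
  then show ?thesis using lipschitz_on_continuous_on continuous_on_subset by blast
qed

lemma sg_deriv: "0 < x \<Longrightarrow> (sg l h has_real_derivative sg' l h x) (at x)"
proof -
  assume x: "0 < x"
  have "((\<lambda>y. Eh l h - phi l h y) has_real_derivative 0 - (l * phi l h x - l * h x)) (at x)"
    by (intro DERIV_diff DERIV_const phi_deriv[OF l h x])
  then show ?thesis unfolding sg_def[abs_def] sg'_def by (simp add: algebra_simps)
qed

lemma sg'_bd: "\<bar>sg' l h x\<bar> \<le> 1"
proof -
  have "\<bar>sg' l h x\<bar> = l * \<bar>h x - phi l h x\<bar>" using l by (simp add: sg'_def abs_mult)
  also have "\<dots> \<le> l * (1 / l)" using h_phi[OF l h, of x] l by (intro mult_left_mono) auto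
  finally show ?thesis using l by simp
qed

lemma sg'_lip: "\<bar>sg' l h x - sg' l h y\<bar> \<le> 2 * l * \<bar>x - y\<bar>"
proof -
  have "sg' l h x - sg' l h y = l * ((h x - h y) - (phi l h x - phi l h y))"
    by (simp add: sg'_def algebra_simps)
  also have "\<bar>\<dots>\<bar> = l * \<bar>(h x - h y) - (phi l h x - phi l h y)\<bar>" using l by (simp add: abs_mult)
  also have "\<dots> \<le> l * (\<bar>x - y\<bar> + \<bar>x - y\<bar>)"
    using lip_abs[OF h, of x y] phi_lip[OF l h, of x y] l
    by (intro mult_left_mono) (auto simp: abs_diff_le_iff)
  finally show ?thesis by simp
qed

lemma sg_bd: "0 \<le> x \<Longrightarrow> \<bar>sg l h x\<bar> \<le> x"
  using sg_lip[of x 0] by (simp add: sg0)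

lemma stein_eq: "sg' l h x / l - sg l h x = h x - Eh l h"
  using l by (simp add: sg'_def sg_def)

lemma sF0: "sF l h 0 = 0" by (simp add: sF_def)

lemma sF_deriv: "0 < x \<Longrightarrow> (sF l h has_real_derivative sg l h x) (at x)"
proof -
  assume x: "0 < x"
  have "(sF l h has_real_derivative sg l h x) (at x within {0..x+1})"
    unfolding sF_def[abs_def]
    by (rule integral_has_real_derivative) (use x sg_cont in auto)
  moreover have "at x within {0..x+1} = at x"
    by (rule at_within_interior) (use x in simp)
  ultimately show ?thesis by simp
qed

lemma sF_cont: "continuous_on {0..b} (sF l h)"
  unfolding sF_def[abs_def]
  by (rule indefinite_integral_continuous_1) (rule integrable_continuous_real[OF sg_cont])

lemma sF_bd: "0 \<le> x \<Longrightarrow> \<bar>sF l h x\<bar> \<le> x * x"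
proof -
  assume x: "0 \<le> x"
  have "\<bar>sF l h x - sF l h 0\<bar> \<le> x * \<bar>x - 0\<bar>"
    by (rule deriv_bound_sym[OF sF_cont sF_deriv, of 0 x x])
       (use x in \<open>auto simp: min_def max_def intro: order_trans[OF sg_bd]\<close>)
  then show ?thesis using x by (simp add: sF0)
qed

lemma taylor1: "0 \<le> x \<Longrightarrow> 0 \<le> t \<Longrightarrow> \<bar>sg l h t - sg l h x - sg' l h x * (t - x)\<bar> \<le> 2 * l * (t - x)\<^sup>2"
proof -
  assume x: "0 \<le> x" and t: "0 \<le> t"
  let ?c = "\<lambda>u. sg l h u - sg l h x - sg' l h x * (u - x)"
  have c: "continuous_on {0..b} ?c" for b using sg_cont by (auto intro!: continuous_intros)
  have d: "(?c has_real_derivative (sg' l h u - sg' l h x)) (at u)" if "0 < u" for u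
    using that by (auto intro!: derivative_eq_intros sg_deriv)
  have "\<bar>?c t - ?c x\<bar> \<le> (2 * l * \<bar>t - x\<bar>) * \<bar>t - x\<bar>"
  proof (rule deriv_bound_sym[OF c d x t])
    fix u assume "min x t < u" "u < max x t"
    then have "\<bar>u - x\<bar> \<le> \<bar>t - x\<bar>" by (auto simp: min_def max_def split: if_splits)
    then show "\<bar>sg' l h u - sg' l h x\<bar> \<le> 2 * l * \<bar>t - x\<bar>"
      using sg'_lip[of u x] l by (meson mult_left_mono order_trans less_le zero_le_mult_iff zero_less_numeral)
  qed
  then show ?thesis by (simp add: power2_eq_square abs_mult_self_eq mult.assoc)
qed

lemma taylor2:
  assumes x: "0 \<le> x" and y: "0 \<le> y"
  shows "\<bar>sF l h y - sF l h x - sg l h x * (y - x) - sg' l h x * (y - x)\<^sup>2 / 2\<bar> \<le> 2 * l * \<bar>y - x\<bar> ^ 3"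
proof -
  let ?c = "\<lambda>u. sF l h u - sF l h x - sg l h x * (u - x) - sg' l h x * (u - x)\<^sup>2 / 2"
  have c: "continuous_on {0..b} ?c" for b using sF_cont by (auto intro!: continuous_intros)
  have d: "(?c has_real_derivative (sg l h u - sg l h x - sg' l h x * (u - x))) (at u)" if "0 < u" for u
    using that by (auto intro!: derivative_eq_intros sF_deriv simp: field_simps)
  have "\<bar>?c y - ?c x\<bar> \<le> (2 * l * (y - x)\<^sup>2) * \<bar>y - x\<bar>"
  proof (rule deriv_bound_sym[OF c d x y])
    fix u assume u: "min x y < u" "u < max x y"
    then have "\<bar>u - x\<bar> \<le> \<bar>y - x\<bar>" by (cases "x \<le> y") (auto simp: min_def max_def)
    then have "(u - x)\<^sup>2 \<le> (y - x)\<^sup>2" by (simp add: abs_le_square_iff)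
    moreover have "\<bar>sg l h u - sg l h x - sg' l h x * (u - x)\<bar> \<le> 2 * l * (u - x)\<^sup>2"
      using taylor1[OF x, of u] u x y by (cases "x \<le> y") (auto simp: min_def max_def)
    ultimately show "\<bar>sg l h u - sg l h x - sg' l h x * (u - x)\<bar> \<le> 2 * l * (y - x)\<^sup>2"
      using l by (meson mult_left_mono order_trans less_imp_le zero_le_mult_iff zero_less_numeral)
  qed
  then show ?thesis by (simp add: power2_eq_square power3_eq_cube abs_mult mult.assoc)
qed

end

lemma integrable_fst_pair:
  fixes f :: "'a \<Rightarrow> real"
  assumes "integrable (measure_pmf A) f"
  shows "integrable (measure_pmf (pair_pmf A B)) (\<lambda>z. f (fst z))"
proof -
  have "integrable (measure_pmf (map_pmf fst (pair_pmf A B))) f" using assms by (simp add: map_fst_pair_pmf)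
  then show ?thesis by simp
qed

lemma pair_pmf_mult_nonneg:
  fixes f :: "'a \<Rightarrow> real" and g :: "'b \<Rightarrow> real"
  assumes f: "integrable (measure_pmf A) f" and f0: "\<And>a. 0 \<le> f a"
    and g0: "\<And>b. 0 \<le> g b" and gc: "\<And>b. b \<in> set_pmf B \<Longrightarrow> g b \<le> c"
  shows "(\<integral>z. f (fst z) * g (snd z) \<partial>pair_pmf A B) = (\<integral>a. f a \<partial>A) * (\<integral>b. g b \<partial>B)"
proof -
  have ig: "integrable (measure_pmf B) g"
    by (rule measure_pmf.integrable_const_bound[where B=c]) (use g0 gc in \<open>auto intro!: AE_pmfI\<close>)
  have ip: "integrable (measure_pmf (pair_pmf A B)) (\<lambda>z. f (fst z) * g (snd z))"
  proof (rule Bochner_Integration.integrable_bound)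
    show "integrable (measure_pmf (pair_pmf A B)) (\<lambda>z. c * f (fst z))"
      using integrable_fst_pair[OF f, of B] by simp
    show "AE z in measure_pmf (pair_pmf A B). norm (f (fst z) * g (snd z)) \<le> norm (c * f (fst z))"
    proof (rule AE_pmfI)
      fix z assume "z \<in> set_pmf (pair_pmf A B)"
      then have "g (snd z) \<le> \<bar>c\<bar>" using gc by (cases z) (auto intro: order_trans[OF _ abs_ge_self])
      then show "norm (f (fst z) * g (snd z)) \<le> norm (c * f (fst z))"
        using f0[of "fst z"] g0[of "snd z"] by (simp add: abs_mult mult.commute[of "f (fst z)"] mult_right_mono)
    qed
  qed simp
  have "ennreal (\<integral>z. f (fst z) * g (snd z) \<partial>pair_pmf A B) = (\<integral>\<^sup>+z. ennreal (f (fst z) * g (snd z)) \<partial>pair_pmf A B)"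
    by (rule nn_integral_eq_integral[symmetric, OF ip]) (use f0 g0 in \<open>auto intro!: AE_I2\<close>)
  also have "\<dots> = (\<integral>\<^sup>+a. \<integral>\<^sup>+b. ennreal (f a) * ennreal (g b) \<partial>B \<partial>A)"
    by (simp add: nn_integral_pair_pmf' ennreal_mult f0 g0)
  also have "\<dots> = (\<integral>\<^sup>+a. ennreal (f a) * (\<integral>\<^sup>+b. ennreal (g b) \<partial>B) \<partial>A)"
    by (simp add: nn_integral_cmult)
  also have "\<dots> = (\<integral>\<^sup>+a. ennreal (f a) \<partial>A) * (\<integral>\<^sup>+b. ennreal (g b) \<partial>B)"
    by (simp add: nn_integral_multc)
  also have "\<dots> = ennreal (\<integral>a. f a \<partial>A) * ennreal (\<integral>b. g b \<partial>B)"
    by (simp add: nn_integral_eq_integral f ig f0 g0)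
  also have "\<dots> = ennreal ((\<integral>a. f a \<partial>A) * (\<integral>b. g b \<partial>B))"
    by (simp add: ennreal_mult f0 g0)
  finally show ?thesis
    by (subst (asm) ennreal_inj) (auto intro!: integral_nonneg_AE mult_nonneg_nonneg f0 g0)
qed

lemma integrable_pair_mult:
  fixes f :: "'a \<Rightarrow> real" and g :: "'b \<Rightarrow> real"
  assumes f: "integrable (measure_pmf A) f" and gc: "\<And>b. b \<in> set_pmf B \<Longrightarrow> \<bar>g b\<bar> \<le> c"
  shows "integrable (measure_pmf (pair_pmf A B)) (\<lambda>z. f (fst z) * g (snd z))"
proof (rule Bochner_Integration.integrable_bound)
  show "integrable (measure_pmf (pair_pmf A B)) (\<lambda>z. c * \<bar>f (fst z)\<bar>)"
    using integrable_fst_pair[OF integrable_abs[OF f], of B] by simp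
  show "AE z in measure_pmf (pair_pmf A B). norm (f (fst z) * g (snd z)) \<le> norm (c * \<bar>f (fst z)\<bar>)"
  proof (rule AE_pmfI)
    fix z assume "z \<in> set_pmf (pair_pmf A B)"
    then have "\<bar>g (snd z)\<bar> \<le> c" using gc by (cases z) auto
    moreover have "0 \<le> c" using calculation by linarith
    ultimately show "norm (f (fst z) * g (snd z)) \<le> norm (c * \<bar>f (fst z)\<bar>)"
      by (simp add: abs_mult mult.commute[of "\<bar>f (fst z)\<bar>"] mult_right_mono)
  qed
qed simp

lemma pair_pmf_mult:
  fixes f :: "'a \<Rightarrow> real" and g :: "'b \<Rightarrow> real"
  assumes f: "integrable (measure_pmf A) f" and gc: "\<And>b. b \<in> set_pmf B \<Longrightarrow> \<bar>g b\<bar> \<le> c"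
  shows "(\<integral>z. f (fst z) * g (snd z) \<partial>pair_pmf A B) = (\<integral>a. f a \<partial>A) * (\<integral>b. g b \<partial>B)"
proof -
  define f1 where "f1 a = max (f a) 0" for a
  define f2 where "f2 a = max (- f a) 0" for a
  define g1 where "g1 b = max 0 (g b + c)" for b
  have if1: "integrable (measure_pmf A) f1" unfolding f1_def using f by auto
  have if2: "integrable (measure_pmf A) f2" unfolding f2_def using f by auto
  have g1c: "\<And>b. b \<in> set_pmf B \<Longrightarrow> g1 b \<le> 2 * c" using gc unfolding g1_def by fastforce
  have g1a: "\<And>b. b \<in> set_pmf B \<Longrightarrow> \<bar>g1 b\<bar> \<le> 2 * c" using gc unfolding g1_def by fastforce
  have e1: "(\<integral>z. f1 (fst z) * g1 (snd z) \<partial>pair_pmf A B) = (\<integral>a. f1 a \<partial>A) * (\<integral>b. g1 b \<partial>B)"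
    by (rule pair_pmf_mult_nonneg[OF if1 _ _ g1c]) (auto simp: f1_def g1_def)
  have e2: "(\<integral>z. f2 (fst z) * g1 (snd z) \<partial>pair_pmf A B) = (\<integral>a. f2 a \<partial>A) * (\<integral>b. g1 b \<partial>B)"
    by (rule pair_pmf_mult_nonneg[OF if2 _ _ g1c]) (auto simp: f2_def g1_def)
  have i1: "integrable (measure_pmf (pair_pmf A B)) (\<lambda>z. f1 (fst z) * g1 (snd z))"
    by (rule integrable_pair_mult[OF if1 g1a])
  have i2: "integrable (measure_pmf (pair_pmf A B)) (\<lambda>z. f2 (fst z) * g1 (snd z))"
    by (rule integrable_pair_mult[OF if2 g1a])
  have i3: "integrable (measure_pmf (pair_pmf A B)) (\<lambda>z. c * f (fst z))"
    using integrable_fst_pair[OF f, of B] by simp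
  have pw: "(\<integral>z. f (fst z) * g (snd z) \<partial>pair_pmf A B) =
        (\<integral>z. (f1 (fst z) * g1 (snd z) - f2 (fst z) * g1 (snd z)) - c * f (fst z) \<partial>pair_pmf A B)"
  proof (rule integral_cong_AE)
    show "AE z in measure_pmf (pair_pmf A B). f (fst z) * g (snd z) = (f1 (fst z) * g1 (snd z) - f2 (fst z) * g1 (snd z)) - c * f (fst z)"
    proof (rule AE_pmfI)
      fix z assume "z \<in> set_pmf (pair_pmf A B)"
      then have "\<bar>g (snd z)\<bar> \<le> c" using gc by (cases z) auto
      then have ge: "g1 (snd z) = g (snd z) + c" unfolding g1_def by auto
      have fe: "f1 (fst z) = f (fst z) + f2 (fst z)" unfolding f1_def f2_def by auto
      show "f (fst z) * g (snd z) = (f1 (fst z) * g1 (snd z) - f2 (fst z) * g1 (snd z)) - c * f (fst z)"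
        by (simp only: ge fe) (simp add: algebra_simps)
    qed
  qed simp_all
  have lin: "(\<integral>z. (f1 (fst z) * g1 (snd z) - f2 (fst z) * g1 (snd z)) - c * f (fst z) \<partial>pair_pmf A B)
     = ((\<integral>z. f1 (fst z) * g1 (snd z) \<partial>pair_pmf A B) - (\<integral>z. f2 (fst z) * g1 (snd z) \<partial>pair_pmf A B))
       - (\<integral>z. c * f (fst z) \<partial>pair_pmf A B)"
    using i1 i2 i3 by (subst Bochner_Integration.integral_diff) (auto intro!: Bochner_Integration.integral_diff)
  have cf: "(\<integral>z. c * f (fst z) \<partial>pair_pmf A B) = c * (\<integral>a. f a \<partial>A)" by simp
  have gg: "(\<integral>b. g1 b \<partial>B) = (\<integral>b. g b \<partial>B) + c"
  proof -
    have ig: "integrable (measure_pmf B) g"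
      by (rule measure_pmf.integrable_const_bound[where B=c]) (use gc in \<open>auto intro!: AE_pmfI\<close>)
    have "(\<integral>b. g1 b \<partial>B) = (\<integral>b. g b + c \<partial>B)"
    proof (rule integral_cong_AE)
      show "AE x in measure_pmf B. g1 x = g x + c"
        by (rule AE_pmfI) (use gc in \<open>force simp: g1_def\<close>)
    qed simp_all
    then show ?thesis using ig by (simp add: measure_pmf.prob_space)
  qed
  have fd: "(\<integral>a. f a \<partial>A) = (\<integral>a. f1 a \<partial>A) - (\<integral>a. f2 a \<partial>A)"
  proof -
    have "(\<integral>a. f a \<partial>A) = (\<integral>a. f1 a - f2 a \<partial>A)"
      by (rule Bochner_Integration.integral_cong) (auto simp: f1_def f2_def)
    then show ?thesis using if1 if2 by simp
  qed
  show ?thesis unfolding pw lin cf e1 e2 gg fd by (simp add: algebra_simps)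
qed

lemma l1_nonneg: "0 \<le> l1 N q" by (simp add: l1_def sum_nonneg)

context
  fixes N :: nat and ar :: "nat pmf" and policy :: "qvec \<Rightarrow> nat \<Rightarrow> qvec pmf"
    and serv :: "nat \<Rightarrow> nat pmf" and p :: "qvec pmf" and A_max S_max :: nat
  assumes serv_all: "\<forall>n<N. set_pmf (serv n) \<subseteq> {..S_max}"
    and arr_bdd: "set_pmf ar \<subseteq> {..A_max}"
    and policy_all: "\<forall>q a x. x \<in> set_pmf (policy q a) \<longrightarrow> (\<Sum>n<N. x n) = a"
    and stat: "stationary N ar policy serv p"
    and mom_all: "\<forall>k. integrable (measure_pmf p) (\<lambda>q. l1 N q ^ k)"
begin

lemma serv_bdd: "n < N \<Longrightarrow> set_pmf (serv n) \<subseteq> {..S_max}"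
  using serv_all by blast

lemma mom: "integrable (measure_pmf p) (\<lambda>q. l1 N q ^ k)"
  using mom_all by blast

lemma policy_ok: "x \<in> set_pmf (policy q a) \<Longrightarrow> (\<Sum>n<N. x n) = a"
  using policy_all by blast

abbreviation "J \<equiv> steady_joint N ar policy serv p"
abbreviation "PS \<equiv> Pi_pmf {..<N} 0 serv"

lemma setJ:
  assumes "(q, x, s) \<in> set_pmf J"
  shows "q \<in> set_pmf p" "(\<Sum>n<N. x n) \<le> A_max" "\<And>n. n < N \<Longrightarrow> s n \<le> S_max" "s \<in> set_pmf PS"
proof -
  obtain a where q: "q \<in> set_pmf p" and a: "a \<in> set_pmf ar" and x: "x \<in> set_pmf (policy q a)"
    and s: "s \<in> set_pmf PS"
    using assms by (auto simp: steady_joint_def lb_slot_def)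
  show "q \<in> set_pmf p" by fact
  show "(\<Sum>n<N. x n) \<le> A_max" using policy_ok[OF x] a arr_bdd by auto
  show "s \<in> set_pmf PS" by fact
  fix n assume n: "n < N"
  then have "s n \<in> set_pmf (serv n)" using s set_Pi_pmf_subset'[of "{..<N}" 0 serv] by (auto simp: PiE_dflt_def)
  then show "s n \<le> S_max" using serv_bdd[OF n] by auto
qed

lemma map_fst_J: "map_pmf fst J = p"
  unfolding steady_joint_def by (simp add: map_bind_pmf map_pmf_comp case_prod_unfold bind_return_pmf')

lemma map_next_J: "map_pmf (\<lambda>(q, x, s). next_queue N q x s) J = p"
proof -
  have "map_pmf (\<lambda>(q, x, s). next_queue N q x s) J = bind_pmf p (lb_kernel N ar policy serv)"
    unfolding steady_joint_def lb_kernel_def by (simp add: map_bind_pmf map_pmf_comp case_prod_unfold)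
  then show ?thesis using stat unfolding stationary_def by simp
qed

definition DD :: "real pmf" where
  "DD = map_pmf (\<lambda>(a, s). real a - real (\<Sum>n<N. s n)) (pair_pmf ar PS)"

lemma map_D_J: "map_pmf (\<lambda>(q, x, s). (q, real (\<Sum>n<N. x n) - real (\<Sum>n<N. s n))) J = pair_pmf p DD"
proof -
  have inner: "map_pmf (\<lambda>(x, s). (q, real (\<Sum>n<N. x n) - real (\<Sum>n<N. s n))) (lb_slot N ar policy serv q)
      = map_pmf (Pair q) DD" for q
  proof -
    have "map_pmf (\<lambda>(x, s). (q, real (\<Sum>n<N. x n) - real (\<Sum>n<N. s n))) (lb_slot N ar policy serv q)
       = bind_pmf ar (\<lambda>a. bind_pmf (policy q a) (\<lambda>x. bind_pmf PS (\<lambda>s. return_pmf (q, real (\<Sum>n<N. x n) - real (\<Sum>n<N. s n)))))"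
      unfolding lb_slot_def by (simp add: map_bind_pmf)
    also have "\<dots> = bind_pmf ar (\<lambda>a. bind_pmf (policy q a) (\<lambda>x. bind_pmf PS (\<lambda>s. return_pmf (q, real a - real (\<Sum>n<N. s n)))))"
      by (intro bind_pmf_cong refl) (simp add: policy_ok)
    also have "\<dots> = bind_pmf ar (\<lambda>a. bind_pmf PS (\<lambda>s. return_pmf (q, real a - real (\<Sum>n<N. s n))))"
      by simp
    also have "\<dots> = map_pmf (Pair q) DD"
      unfolding DD_def pair_pmf_def by (simp add: map_bind_pmf)
    finally show ?thesis .
  qed
  have "map_pmf (\<lambda>(q, x, s). (q, real (\<Sum>n<N. x n) - real (\<Sum>n<N. s n))) J
      = bind_pmf p (\<lambda>q. map_pmf (\<lambda>(x, s). (q, real (\<Sum>n<N. x n) - real (\<Sum>n<N. s n))) (lb_slot N ar policy serv q))"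
    unfolding steady_joint_def by (simp add: map_bind_pmf map_pmf_comp case_prod_unfold)
  also have "\<dots> = bind_pmf p (\<lambda>q. map_pmf (Pair q) DD)" by (rule bind_pmf_cong[OF refl inner])
  also have "\<dots> = pair_pmf p DD" unfolding pair_pmf_def map_pmf_def by simp
  finally show ?thesis .
qed

lemma int_poly2: "integrable (measure_pmf p) (\<lambda>q. (1 + l1 N q)\<^sup>2)"
proof -
  have "(\<lambda>q. (1 + l1 N q)\<^sup>2) = (\<lambda>q. 1 + 2 * l1 N q ^ 1 + l1 N q ^ 2)"
    by (auto simp: power2_eq_square algebra_simps)
  then show ?thesis using mom[of 1] mom[of 2] by simp
qed

lemma intJ:
  fixes f :: "qvec \<times> qvec \<times> qvec \<Rightarrow> real"
  assumes "\<And>z. z \<in> set_pmf J \<Longrightarrow> \<bar>f z\<bar> \<le> c * (1 + l1 N (fst z))\<^sup>2"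
  shows "integrable (measure_pmf J) f"
proof (rule Bochner_Integration.integrable_bound)
  have "integrable (measure_pmf (map_pmf fst J)) (\<lambda>q. c * (1 + l1 N q)\<^sup>2)"
    unfolding map_fst_J using int_poly2 by simp
  then show "integrable (measure_pmf J) (\<lambda>z. c * (1 + l1 N (fst z))\<^sup>2)" by simp
  show "AE z in measure_pmf J. norm (f z) \<le> norm (c * (1 + l1 N (fst z))\<^sup>2)"
    by (rule AE_pmfI) (use assms in \<open>fastforce\<close>)
qed simp

lemma comp_identity:
  "real (q n + x n - s n) - real (s n - (x n + q n)) = real (q n) + real (x n) - real (s n)"
  by (cases "s n \<le> q n + x n") auto

lemma l1_next_unused:
  "l1 N (next_queue N q x s) - l1 N (unused N q x s) = l1 N q + real (\<Sum>n<N. x n) - real (\<Sum>n<N. s n)"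
proof -
  have "l1 N (next_queue N q x s) - l1 N (unused N q x s) = (\<Sum>n<N. real (q n + x n - s n) - real (s n - (x n + q n)))"
    by (simp add: l1_def next_queue_def unused_def sum_subtractf)
  also have "\<dots> = (\<Sum>n<N. real (q n) + real (x n) - real (s n))"
    by (simp add: comp_identity)
  finally show ?thesis by (simp add: l1_def sum.distrib sum_subtractf)
qed

lemma bounds_J:
  assumes z: "(q, x, s) \<in> set_pmf J"
  shows "l1 N (unused N q x s) \<le> real N * real S_max"
    and "l1 N (next_queue N q x s) \<le> l1 N q + real A_max"
    and "l1 N q \<le> l1 N (next_queue N q x s) + real N * real S_max"
    and "\<bar>real (\<Sum>n<N. x n) - real (\<Sum>n<N. s n)\<bar> \<le> real A_max + real N * real S_max"
    and "0 \<le> l1 N (unused N q x s)"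
proof -
  note sb = setJ(3)[OF z]
  have S: "(\<Sum>n<N. s n) \<le> N * S_max"
    using sum_mono[of "{..<N}" s "\<lambda>_. S_max"] sb by auto
  have "(\<Sum>n<N. unused N q x s n) \<le> (\<Sum>n<N. s n)"
    by (intro sum_mono) (auto simp: unused_def)
  then show U: "l1 N (unused N q x s) \<le> real N * real S_max"
    using S unfolding l1_def by (metis of_nat_le_iff of_nat_mult order_trans)
  show U0: "0 \<le> l1 N (unused N q x s)" by (rule l1_nonneg)
  have X: "(\<Sum>n<N. x n) \<le> A_max" by (rule setJ(2)[OF z])
  have "(\<Sum>n<N. next_queue N q x s n) \<le> (\<Sum>n<N. q n + x n)"
    by (intro sum_mono) (auto simp: next_queue_def)
  also have "\<dots> = (\<Sum>n<N. q n) + (\<Sum>n<N. x n)" by (simp add: sum.distrib)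
  finally show "l1 N (next_queue N q x s) \<le> l1 N q + real A_max"
    using X unfolding l1_def by (metis add_left_mono of_nat_add of_nat_le_iff order_trans)
  have "(\<Sum>n<N. q n) \<le> (\<Sum>n<N. next_queue N q x s n + s n)"
    by (intro sum_mono) (auto simp: next_queue_def)
  also have "\<dots> = (\<Sum>n<N. next_queue N q x s n) + (\<Sum>n<N. s n)" by (simp add: sum.distrib)
  finally show "l1 N q \<le> l1 N (next_queue N q x s) + real N * real S_max"
    using S unfolding l1_def by (metis add_left_mono of_nat_add of_nat_le_iff order_trans of_nat_mult)
  show "\<bar>real (\<Sum>n<N. x n) - real (\<Sum>n<N. s n)\<bar> \<le> real A_max + real N * real S_max"
  proof -
    have a: "real (\<Sum>n<N. x n) \<le> real A_max" using X by (simp only: of_nat_le_iff)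
    moreover have b: "real (\<Sum>n<N. s n) \<le> real N * real S_max" using S
      by (metis of_nat_le_iff of_nat_mult)
    moreover have "0 \<le> real (\<Sum>n<N. x n)" "0 \<le> real (\<Sum>n<N. s n)" by (simp_all only: of_nat_0_le_iff)
    ultimately show ?thesis by (simp only: abs_le_iff) linarith
  qed
qed

lemma PS_bound: assumes "s \<in> set_pmf PS" shows "\<And>n. n < N \<Longrightarrow> s n \<le> S_max"
  and "real (\<Sum>n<N. s n) \<le> real N * real S_max"
proof -
  show sb: "\<And>n. n < N \<Longrightarrow> s n \<le> S_max"
  proof -
    fix n assume n: "n < N"
    then have "s n \<in> set_pmf (serv n)" using assms set_Pi_pmf_subset'[of "{..<N}" 0 serv] by (auto simp: PiE_dflt_def)
    then show "s n \<le> S_max" using serv_bdd[OF n] by auto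
  qed
  have "(\<Sum>n<N. s n) \<le> N * S_max"
    using sum_mono[of "{..<N}" s "\<lambda>_. S_max"] sb by auto
  then show "real (\<Sum>n<N. s n) \<le> real N * real S_max" by (metis of_nat_le_iff of_nat_mult)
qed

lemma SS_bound: "s \<in> set_pmf PS \<Longrightarrow> \<bar>\<Sum>n<N. real (s n)\<bar> \<le> real N * real S_max"
  using PS_bound(2)[of s] by (simp add: sum_nonneg)

lemma ar_bound: "a \<in> set_pmf ar \<Longrightarrow> real a \<le> real A_max"
  using arr_bdd by auto

lemma DD_bound: "d \<in> set_pmf DD \<Longrightarrow> \<bar>d\<bar> \<le> real A_max + real N * real S_max"
proof -
  assume "d \<in> set_pmf DD"
  then obtain a s where d: "d = real a - real (\<Sum>n<N. s n)" and a: "a \<in> set_pmf ar" and s: "s \<in> set_pmf PS"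
    unfolding DD_def by auto
  show ?thesis using d ar_bound[OF a] SS_bound[OF s] by (simp add: abs_le_iff)
qed

abbreviation "SS \<equiv> (\<lambda>s. real (\<Sum>n<N. s n))"

lemma int_PS: "(\<And>s. s \<in> set_pmf PS \<Longrightarrow> \<bar>f s\<bar> \<le> c) \<Longrightarrow> integrable (measure_pmf PS) (f :: _ \<Rightarrow> real)"
  by (rule measure_pmf.integrable_const_bound[where B=c]) (auto intro!: AE_pmfI)

lemma int_ar: "(\<And>a. a \<in> set_pmf ar \<Longrightarrow> \<bar>f a\<bar> \<le> c) \<Longrightarrow> integrable (measure_pmf ar) (f :: _ \<Rightarrow> real)"
  by (rule measure_pmf.integrable_const_bound[where B=c]) (auto intro!: AE_pmfI)

lemma int_pairar: "(\<And>z. z \<in> set_pmf (pair_pmf ar PS) \<Longrightarrow> \<bar>f z\<bar> \<le> c) \<Longrightarrow> integrable (measure_pmf (pair_pmf ar PS)) (f :: _ \<Rightarrow> real)"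
  by (rule measure_pmf.integrable_const_bound[where B=c]) (auto intro!: AE_pmfI)

lemma E_PS_S: "measure_pmf.expectation PS SS = (\<Sum>n<N. measure_pmf.expectation (serv n) real)"
proof -
  have "measure_pmf.expectation PS SS = measure_pmf.expectation PS (\<lambda>s. \<Sum>n<N. real (s n))"
    by simp
  also have "\<dots> = (\<Sum>n<N. measure_pmf.expectation PS (\<lambda>s. real (s n)))"
  proof (rule Bochner_Integration.integral_sum)
    fix n assume n: "n \<in> {..<N}"
    show "integrable (measure_pmf PS) (\<lambda>s. real (s n))"
      by (rule int_PS[where c="real S_max"]) (use PS_bound(1) n in auto)
  qed
  also have "\<dots> = (\<Sum>n<N. measure_pmf.expectation (serv n) real)"
  proof (rule sum.cong[OF refl])
    fix n assume n: "n \<in> {..<N}"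
    have "measure_pmf.expectation PS (\<lambda>s. real (s n)) = measure_pmf.expectation (map_pmf (\<lambda>s. s n) PS) real"
      by simp
    also have "map_pmf (\<lambda>s. s n) PS = serv n" using n by (simp add: Pi_pmf_component)
    finally show "measure_pmf.expectation PS (\<lambda>s. real (s n)) = measure_pmf.expectation (serv n) real" .
  qed
  finally show ?thesis .
qed

lemma E_DD1: "measure_pmf.expectation DD (\<lambda>d. d) = measure_pmf.expectation ar real - measure_pmf.expectation PS SS"
proof -
  have i1: "integrable (measure_pmf (pair_pmf ar PS)) (\<lambda>z. real (fst z))"
    by (rule int_pairar[where c="real A_max"]) (auto dest: ar_bound)
  have i2: "integrable (measure_pmf (pair_pmf ar PS)) (\<lambda>z. SS (snd z))"
    by (rule int_pairar[where c="real N * real S_max"]) (auto dest: SS_bound)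
  have "measure_pmf.expectation DD (\<lambda>d. d) = measure_pmf.expectation (pair_pmf ar PS) (\<lambda>z. real (fst z) - SS (snd z))"
    unfolding DD_def by (simp add: case_prod_unfold)
  also have "\<dots> = measure_pmf.expectation (pair_pmf ar PS) (\<lambda>z. real (fst z)) - measure_pmf.expectation (pair_pmf ar PS) (\<lambda>z. SS (snd z))"
    by (rule Bochner_Integration.integral_diff[OF i1 i2])
  also have "\<dots> = measure_pmf.expectation ar real - measure_pmf.expectation PS SS"
    using expectation_pair_pmf_snd[of ar PS SS] expectation_pair_pmf_fst[of ar PS real] by simp
  finally show ?thesis .
qed

lemma E_DD2: "measure_pmf.expectation DD (\<lambda>d. d\<^sup>2) =
    measure_pmf.expectation ar (\<lambda>a. (real a)\<^sup>2) - 2 * measure_pmf.expectation ar real * measure_pmf.expectation PS SS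
    + measure_pmf.expectation PS (\<lambda>s. (SS s)\<^sup>2)"
proof -
  let ?P = "pair_pmf ar PS"
  have i1: "integrable (measure_pmf ?P) (\<lambda>z. (real (fst z))\<^sup>2)"
    by (rule int_pairar[where c="real A_max ^ 2"]) (auto dest!: ar_bound intro!: power_mono)
  have i2: "integrable (measure_pmf ?P) (\<lambda>z. 2 * (real (fst z) * SS (snd z)))"
    by (rule int_pairar[where c="2 * (real A_max * (real N * real S_max))"])
       (auto dest!: ar_bound SS_bound intro!: mult_mono simp: abs_mult)
  have i3: "integrable (measure_pmf ?P) (\<lambda>z. (SS (snd z))\<^sup>2)"
    by (rule int_pairar[where c="(real N * real S_max) ^ 2"]) (auto dest!: SS_bound simp: abs_le_square_iff[symmetric])
  have "measure_pmf.expectation DD (\<lambda>d. d\<^sup>2) = measure_pmf.expectation ?P (\<lambda>z. (real (fst z))\<^sup>2 - 2 * (real (fst z) * SS (snd z)) + (SS (snd z))\<^sup>2)"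
  proof -
    have "measure_pmf.expectation DD (\<lambda>d. d\<^sup>2) = measure_pmf.expectation ?P (\<lambda>z. (real (fst z) - SS (snd z))\<^sup>2)"
      unfolding DD_def by (simp add: case_prod_unfold)
    also have "\<dots> = measure_pmf.expectation ?P (\<lambda>z. (real (fst z))\<^sup>2 - 2 * (real (fst z) * SS (snd z)) + (SS (snd z))\<^sup>2)"
      by (rule Bochner_Integration.integral_cong) (simp_all add: power2_diff)
    finally show ?thesis .
  qed
  also have "\<dots> = measure_pmf.expectation ?P (\<lambda>z. (real (fst z))\<^sup>2) - measure_pmf.expectation ?P (\<lambda>z. 2 * (real (fst z) * SS (snd z)))
      + measure_pmf.expectation ?P (\<lambda>z. (SS (snd z))\<^sup>2)"
    using i1 i2 i3 by simp
  also have "measure_pmf.expectation ?P (\<lambda>z. 2 * (real (fst z) * SS (snd z))) = 2 * (measure_pmf.expectation ar real * measure_pmf.expectation PS SS)"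
  proof -
    have "measure_pmf.expectation ?P (\<lambda>z. real (fst z) * SS (snd z)) = measure_pmf.expectation ar real * measure_pmf.expectation PS SS"
      by (rule pair_pmf_mult[where c="real N * real S_max"])
         (auto intro!: int_ar[where c="real A_max"] dest: ar_bound SS_bound)
    then show ?thesis by simp
  qed
  also have "measure_pmf.expectation ?P (\<lambda>z. (real (fst z))\<^sup>2) = measure_pmf.expectation ar (\<lambda>a. (real a)\<^sup>2)"
    by (rule expectation_pair_pmf_fst)
  also have "measure_pmf.expectation ?P (\<lambda>z. (SS (snd z))\<^sup>2) = measure_pmf.expectation PS (\<lambda>s. (SS s)\<^sup>2)"
    using expectation_pair_pmf_snd[of ar PS "\<lambda>s. (SS s)\<^sup>2"] by simp
  finally show ?thesis by simp
qed

lemma EJ_fst: "measure_pmf.expectation J (\<lambda>z. f (fst z)) = measure_pmf.expectation p (f :: _ \<Rightarrow> real)"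
proof -
  have "measure_pmf.expectation J (\<lambda>z. f (fst z)) = measure_pmf.expectation (map_pmf fst J) f" by simp
  then show ?thesis by (simp only: map_fst_J)
qed

lemma EJ_next: "measure_pmf.expectation J (\<lambda>z. f (next_queue N (fst z) (fst (snd z)) (snd (snd z))))
   = measure_pmf.expectation p (f :: _ \<Rightarrow> real)"
proof -
  have "measure_pmf.expectation J (\<lambda>z. f (next_queue N (fst z) (fst (snd z)) (snd (snd z))))
      = measure_pmf.expectation (map_pmf (\<lambda>(q, x, s). next_queue N q x s) J) f"
    by (simp add: case_prod_unfold)
  then show ?thesis by (simp only: map_next_J)
qed

abbreviation "Dz \<equiv> (\<lambda>z::qvec \<times> qvec \<times> qvec. real (\<Sum>n<N. fst (snd z) n) - real (\<Sum>n<N. snd (snd z) n))"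

lemma EJ_indep:
  fixes phi :: "qvec \<Rightarrow> real" and psi :: "real \<Rightarrow> real"
  assumes phi: "integrable (measure_pmf p) phi" and psi: "\<And>d. d \<in> set_pmf DD \<Longrightarrow> \<bar>psi d\<bar> \<le> c"
  shows "measure_pmf.expectation J (\<lambda>z. phi (fst z) * psi (Dz z))
       = measure_pmf.expectation p phi * measure_pmf.expectation DD psi"
proof -
  have "measure_pmf.expectation J (\<lambda>z. phi (fst z) * psi (Dz z))
      = measure_pmf.expectation (map_pmf (\<lambda>(q, x, s). (q, real (\<Sum>n<N. x n) - real (\<Sum>n<N. s n))) J)
          (\<lambda>z. phi (fst z) * psi (snd z))"
    by (simp add: case_prod_unfold)
  also have "\<dots> = measure_pmf.expectation (pair_pmf p DD) (\<lambda>z. phi (fst z) * psi (snd z))"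
    by (simp only: map_D_J)
  also have "\<dots> = measure_pmf.expectation p phi * measure_pmf.expectation DD psi"
    by (rule pair_pmf_mult[OF phi psi])
  finally show ?thesis .
qed

lemma alg2: "(l::real) \<noteq> 0 \<Longrightarrow> e\<^sup>2 * (pp / l - gg) = - (e\<^sup>2 * gg - e\<^sup>2 / 2 * (2 / l + e\<^sup>2) * pp) - e ^ 4 / 2 * pp"
  by (simp add: field_simps power2_eq_square power4_eq_xxxx)

lemma intJ2:
  fixes f :: "qvec \<times> qvec \<times> qvec \<Rightarrow> real"
  assumes "\<And>q x s. (q, x, s) \<in> set_pmf J \<Longrightarrow> \<bar>f (q, x, s)\<bar> \<le> a + b * l1 N q + c * (l1 N q)\<^sup>2"
  shows "integrable (measure_pmf J) f"
proof (rule Bochner_Integration.integrable_bound)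
  have "integrable (measure_pmf (map_pmf fst J)) (\<lambda>q. a + b * l1 N q ^ 1 + c * l1 N q ^ 2)"
    unfolding map_fst_J using mom[of 1] mom[of 2] by simp
  then show "integrable (measure_pmf J) (\<lambda>z. a + b * l1 N (fst z) + c * (l1 N (fst z))\<^sup>2)" by simp
  show "AE z in measure_pmf J. norm (f z) \<le> norm (a + b * l1 N (fst z) + c * (l1 N (fst z))\<^sup>2)"
  proof (rule AE_pmfI)
    fix z assume "z \<in> set_pmf J"
    then show "norm (f z) \<le> norm (a + b * l1 N (fst z) + c * (l1 N (fst z))\<^sup>2)"
      using assms[of "fst z" "fst (snd z)" "snd (snd z)"] by (cases z) auto
  qed
qed simp

lemma pw_E1:
  fixes h :: "real \<Rightarrow> real" and eps l :: real
  assumes l: "0 < l" and h: "lipschitz_on 1 UNIV h" and eps: "0 < eps"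
    and z: "(q, x, s) \<in> set_pmf J"
  defines "W \<equiv> l1 N q" and "Wn \<equiv> l1 N (next_queue N q x s)" and "U \<equiv> l1 N (unused N q x s)"
    and "D \<equiv> real (\<Sum>n<N. x n) - real (\<Sum>n<N. s n)"
    and "SN \<equiv> real N * real S_max" and "B \<equiv> real A_max + real N * real S_max"
  shows "\<bar>sF l h (eps * Wn) - sF l h (eps * W) - eps * sg l h (eps * W) * D - eps\<^sup>2 / 2 * sg' l h (eps * W) * D\<^sup>2\<bar>
    \<le> eps\<^sup>2 * (Wn * U) + eps\<^sup>2 * (SN + B + SN / 2) * U + 2 * l * eps ^ 3 * (B + SN) ^ 3"
proof -
  have W0: "0 \<le> W" unfolding W_def by (rule l1_nonneg)
  have Wn0: "0 \<le> Wn" unfolding Wn_def by (rule l1_nonneg)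
  note bj = bounds_J[OF z]
  have U0: "0 \<le> U" and Ub: "U \<le> SN" using bj unfolding U_def SN_def by auto
  have WWn: "W \<le> Wn + SN" using bj unfolding W_def Wn_def SN_def by auto
  have Db: "\<bar>D\<bar> \<le> B" using bj unfolding D_def B_def by auto
  have SN0: "0 \<le> SN" unfolding SN_def by simp
  have B0: "0 \<le> B" using Db by linarith
  have id: "Wn - W = D + U" unfolding Wn_def W_def U_def D_def using l1_next_unused[of q x s] by simp
  define X where "X = eps * W"
  define Y where "Y = eps * Wn"
  have X0: "0 \<le> X" unfolding X_def using eps W0 by simp
  have Y0: "0 \<le> Y" unfolding Y_def using eps Wn0 by simp
  have dl: "Y - X = eps * (D + U)" unfolding X_def Y_def using id by (simp add: algebra_simps)
  define T where "T = sF l h Y - sF l h X - sg l h X * (Y - X) - sg' l h X * (Y - X)\<^sup>2 / 2"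
  have T: "\<bar>T\<bar> \<le> 2 * l * \<bar>Y - X\<bar> ^ 3" unfolding T_def by (rule taylor2[OF l h X0 Y0])
  have dlb: "\<bar>Y - X\<bar> \<le> eps * (B + SN)"
  proof -
    have "\<bar>D + U\<bar> \<le> B + SN" using Db U0 Ub by (simp add: abs_le_iff)
    then show ?thesis unfolding dl using eps by (simp add: abs_mult)
  qed
  have T2: "\<bar>T\<bar> \<le> 2 * l * eps ^ 3 * (B + SN) ^ 3"
  proof -
    have "\<bar>Y - X\<bar> ^ 3 \<le> (eps * (B + SN)) ^ 3" by (rule power_mono[OF dlb]) simp
    then have "2 * l * \<bar>Y - X\<bar> ^ 3 \<le> 2 * l * (eps * (B + SN)) ^ 3" using l by simp
    moreover have "(eps * (B + SN)) ^ 3 = eps ^ 3 * (B + SN) ^ 3" by (simp add: power_mult_distrib)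
    ultimately show ?thesis using T by (simp add: mult.assoc)
  qed
  have decomp: "sF l h Y - sF l h X - eps * sg l h X * D - eps\<^sup>2 / 2 * sg' l h X * D\<^sup>2
      = T + eps * sg l h X * U + eps\<^sup>2 / 2 * sg' l h X * (2 * D * U + U\<^sup>2)"
    unfolding T_def dl by (simp add: power2_eq_square algebra_simps)
  have b1: "\<bar>eps * sg l h X * U\<bar> \<le> eps\<^sup>2 * (Wn * U) + eps\<^sup>2 * SN * U"
  proof -
    have "\<bar>eps * sg l h X * U\<bar> = eps * \<bar>sg l h X\<bar> * U" using eps U0 by (simp add: abs_mult)
    also have "\<dots> \<le> eps * X * U" using sg_bd[OF l h X0] eps U0 by (intro mult_right_mono mult_left_mono) auto
    also have "\<dots> = eps\<^sup>2 * W * U" unfolding X_def by (simp add: power2_eq_square)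
    also have "\<dots> \<le> eps\<^sup>2 * (Wn + SN) * U" using WWn U0 by (intro mult_right_mono mult_left_mono) auto
    finally show ?thesis by (simp add: algebra_simps)
  qed
  have b2: "\<bar>eps\<^sup>2 / 2 * sg' l h X * (2 * D * U + U\<^sup>2)\<bar> \<le> eps\<^sup>2 * (B + SN / 2) * U"
  proof -
    have "\<bar>2 * D * U + U\<^sup>2\<bar> \<le> 2 * B * U + SN * U"
    proof -
      have "\<bar>2 * D * U + U\<^sup>2\<bar> \<le> 2 * \<bar>D\<bar> * U + U * U" using U0 by (simp add: abs_mult power2_eq_square abs_triangle_ineq[THEN order_trans])
      also have "\<dots> \<le> 2 * B * U + SN * U" using Db Ub U0 by (intro add_mono mult_right_mono) auto
      finally show ?thesis .
    qed
    moreover have "\<bar>sg' l h X\<bar> \<le> 1" by (rule sg'_bd[OF l h])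
    ultimately have "\<bar>sg' l h X * (2 * D * U + U\<^sup>2)\<bar> \<le> 1 * (2 * B * U + SN * U)"
      unfolding abs_mult by (intro mult_mono) auto
    then have "\<bar>eps\<^sup>2 / 2 * (sg' l h X * (2 * D * U + U\<^sup>2))\<bar> \<le> eps\<^sup>2 / 2 * (2 * B * U + SN * U)"
      by (simp add: abs_mult mult_left_mono)
    then show ?thesis by (simp add: algebra_simps)
  qed
  have "\<bar>sF l h Y - sF l h X - eps * sg l h X * D - eps\<^sup>2 / 2 * sg' l h X * D\<^sup>2\<bar>
     \<le> \<bar>T\<bar> + \<bar>eps * sg l h X * U\<bar> + \<bar>eps\<^sup>2 / 2 * sg' l h X * (2 * D * U + U\<^sup>2)\<bar>"
    unfolding decomp by linarith
  also have "\<dots> \<le> 2 * l * eps ^ 3 * (B + SN) ^ 3 + (eps\<^sup>2 * (Wn * U) + eps\<^sup>2 * SN * U) + eps\<^sup>2 * (B + SN / 2) * U"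
    using T2 b1 b2 by linarith
  finally show ?thesis unfolding X_def Y_def by (simp add: algebra_simps)
qed

lemma main_bound:
  fixes h :: "real \<Rightarrow> real" and eps l :: real
  assumes l: "0 < l" and h: "lipschitz_on 1 UNIV h" and eps: "0 < eps"
    and ED: "measure_pmf.expectation DD (\<lambda>d. d) = - eps"
    and ED2: "measure_pmf.expectation DD (\<lambda>d. d\<^sup>2) = 2 / l + eps\<^sup>2"
    and epsb: "eps \<le> real N * real S_max"
  shows "\<bar>measure_pmf.expectation p (\<lambda>q. h (eps * l1 N q)) - Eh l h\<bar>
     \<le> measure_pmf.expectation J (\<lambda>(q, x, s). l1 N (next_queue N q x s) * l1 N (unused N q x s))
        + (2 * (real N * real S_max) + (real A_max + real N * real S_max)
           + 2 * l * (real A_max + 2 * (real N * real S_max)) ^ 3) * eps"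
proof -
  define SN where "SN = real N * real S_max"
  define B where "B = real A_max + real N * real S_max"
  have SN0: "0 \<le> SN" unfolding SN_def by simp
  have B0: "0 \<le> B" unfolding B_def by simp
  define W where "W z = l1 N (fst z)" for z :: "qvec \<times> qvec \<times> qvec"
  define Wn where "Wn z = l1 N (next_queue N (fst z) (fst (snd z)) (snd (snd z)))" for z :: "qvec \<times> qvec \<times> qvec"
  define U where "U z = l1 N (unused N (fst z) (fst (snd z)) (snd (snd z)))" for z :: "qvec \<times> qvec \<times> qvec"
  define F where "F = sF l h"
  define G where "G = sg l h"
  define G' where "G' = sg' l h"
  define E1 where "E1 z = F (eps * Wn z) - F (eps * W z) - eps * G (eps * W z) * Dz z - eps\<^sup>2 / 2 * G' (eps * W z) * (Dz z)\<^sup>2" for z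
  define Bd where "Bd z = eps\<^sup>2 * (Wn z * U z) + eps\<^sup>2 * (SN + B + SN / 2) * U z + 2 * l * eps ^ 3 * (B + SN) ^ 3" for z
  have pw: "\<bar>E1 z\<bar> \<le> Bd z" if z: "z \<in> set_pmf J" for z
  proof -
    obtain q x s where zz: "z = (q, x, s)" by (cases z) auto
    show ?thesis using pw_E1[OF l h eps z[unfolded zz]]
      unfolding E1_def Bd_def zz W_def Wn_def U_def F_def G_def G'_def SN_def B_def by simp
  qed
  note bj = bounds_J
  have W0: "0 \<le> W z" for z unfolding W_def by (rule l1_nonneg)
  have Wn0: "0 \<le> Wn z" for z unfolding Wn_def by (rule l1_nonneg)
  have iW: "integrable (measure_pmf J) W"
    by (rule intJ2[where a=0 and b=1 and c=0]) (simp add: W_def l1_nonneg)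
  have iWn: "integrable (measure_pmf J) Wn"
  proof (rule intJ2[where a="real A_max" and b=1 and c=0])
    fix q x s assume z: "(q, x, s) \<in> set_pmf J"
    show "\<bar>Wn (q, x, s)\<bar> \<le> real A_max + 1 * l1 N q + 0 * (l1 N q)\<^sup>2"
      using bj(2)[OF z] Wn0[of "(q, x, s)"] by (simp add: Wn_def)
  qed
  have iU: "integrable (measure_pmf J) U"
    by (rule intJ2[where a=SN and b=0 and c=0]) (use bj(1) in \<open>auto simp: U_def l1_nonneg SN_def\<close>)
  have iD: "integrable (measure_pmf J) Dz"
    by (rule intJ2[where a=B and b=0 and c=0]) (use bj(4) in \<open>auto simp: B_def\<close>)
  have iWnU: "integrable (measure_pmf J) (\<lambda>z. Wn z * U z)"
  proof (rule intJ2[where a="real A_max * SN" and b=SN and c=0])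
    fix q x s assume z: "(q, x, s) \<in> set_pmf J"
    have "Wn (q, x, s) * U (q, x, s) \<le> (l1 N q + real A_max) * SN"
      using bj(1,2)[OF z] by (intro mult_mono) (auto simp: Wn_def U_def SN_def l1_nonneg)
    then show "\<bar>Wn (q, x, s) * U (q, x, s)\<bar> \<le> real A_max * SN + SN * l1 N q + 0 * (l1 N q)\<^sup>2"
      using Wn0 bj(5)[OF z] by (simp add: U_def algebra_simps)
  qed
  have iFX: "integrable (measure_pmf J) (\<lambda>z. F (eps * W z))"
  proof (rule intJ2[where a=0 and b=0 and c="eps\<^sup>2"])
    fix q x s
    have "\<bar>F (eps * W (q, x, s))\<bar> \<le> (eps * W (q, x, s)) * (eps * W (q, x, s))"
      unfolding F_def by (rule sF_bd[OF l h]) (use eps W0 in simp)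
    then show "\<bar>F (eps * W (q, x, s))\<bar> \<le> 0 + 0 * l1 N q + eps\<^sup>2 * (l1 N q)\<^sup>2"
      by (simp add: W_def power2_eq_square algebra_simps)
  qed
  have iFY: "integrable (measure_pmf J) (\<lambda>z. F (eps * Wn z))"
  proof (rule intJ2[where a="eps\<^sup>2 * real A_max ^ 2" and b="2 * eps\<^sup>2 * real A_max" and c="eps\<^sup>2"])
    fix q x s assume z: "(q, x, s) \<in> set_pmf J"
    have "\<bar>F (eps * Wn (q, x, s))\<bar> \<le> (eps * Wn (q, x, s)) * (eps * Wn (q, x, s))"
      unfolding F_def by (rule sF_bd[OF l h]) (use eps Wn0 in simp)
    also have "\<dots> \<le> (eps * (l1 N q + real A_max)) * (eps * (l1 N q + real A_max))"
      using bj(2)[OF z] eps Wn0[of "(q, x, s)"] by (intro mult_mono) (auto simp: Wn_def)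
    finally show "\<bar>F (eps * Wn (q, x, s))\<bar> \<le> eps\<^sup>2 * real A_max ^ 2 + 2 * eps\<^sup>2 * real A_max * l1 N q + eps\<^sup>2 * (l1 N q)\<^sup>2"
      by (simp add: power2_eq_square algebra_simps)
  qed
  have iGphi: "integrable (measure_pmf p) (\<lambda>q. G (eps * l1 N q))"
  proof (rule Bochner_Integration.integrable_bound)
    show "integrable (measure_pmf p) (\<lambda>q. eps * l1 N q ^ 1)" using mom[of 1] by simp
    show "AE q in measure_pmf p. norm (G (eps * l1 N q)) \<le> norm (eps * l1 N q ^ 1)"
      using sg_bd[OF l h] eps l1_nonneg unfolding G_def by (intro AE_I2) (simp add: abs_mult)
  qed simp
  have iG'phi: "integrable (measure_pmf p) (\<lambda>q. G' (eps * l1 N q))"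
    by (rule measure_pmf.integrable_const_bound[where B=1]) (auto simp: G'_def intro!: AE_I2 sg'_bd[OF l h])
  have iGD: "integrable (measure_pmf J) (\<lambda>z. G (eps * W z) * Dz z)"
  proof (rule intJ2[where a=0 and b="eps * B" and c=0])
    fix q x s assume z: "(q, x, s) \<in> set_pmf J"
    have "\<bar>G (eps * W (q, x, s))\<bar> \<le> eps * W (q, x, s)"
      unfolding G_def by (rule sg_bd[OF l h]) (use eps W0 in simp)
    then have "\<bar>G (eps * W (q, x, s)) * Dz (q, x, s)\<bar> \<le> (eps * W (q, x, s)) * B"
      unfolding abs_mult using bj(4)[OF z] by (intro mult_mono) (auto simp: B_def)
    then show "\<bar>G (eps * W (q, x, s)) * Dz (q, x, s)\<bar> \<le> 0 + eps * B * l1 N q + 0 * (l1 N q)\<^sup>2"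
      by (simp add: W_def algebra_simps)
  qed
  have iG'D: "integrable (measure_pmf J) (\<lambda>z. G' (eps * W z) * (Dz z)\<^sup>2)"
  proof (rule intJ2[where a="B\<^sup>2" and b=0 and c=0])
    fix q x s assume z: "(q, x, s) \<in> set_pmf J"
    have "\<bar>G' (eps * W (q, x, s))\<bar> \<le> 1" unfolding G'_def by (rule sg'_bd[OF l h])
    moreover have "(Dz (q, x, s))\<^sup>2 \<le> B\<^sup>2" using bj(4)[OF z] by (simp add: B_def abs_le_square_iff[symmetric] del: of_nat_sum)
    ultimately have "\<bar>G' (eps * W (q, x, s)) * (Dz (q, x, s))\<^sup>2\<bar> \<le> 1 * B\<^sup>2"
      unfolding abs_mult by (intro mult_mono) auto
    then show "\<bar>G' (eps * W (q, x, s)) * (Dz (q, x, s))\<^sup>2\<bar> \<le> B\<^sup>2 + 0 * l1 N q + 0 * (l1 N q)\<^sup>2" by simp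
  qed
  have iBd: "integrable (measure_pmf J) Bd"
    unfolding Bd_def using iWnU iU by simp
  have iE1: "integrable (measure_pmf J) E1"
    unfolding E1_def using iFY iFX iGD iG'D by (simp add: mult.assoc)
  let ?E = "measure_pmf.expectation J"
  let ?Ep = "measure_pmf.expectation p"
  have eFY: "?E (\<lambda>z. F (eps * Wn z)) = ?Ep (\<lambda>q. F (eps * l1 N q))"
    unfolding Wn_def by (rule EJ_next)
  have eFX: "?E (\<lambda>z. F (eps * W z)) = ?Ep (\<lambda>q. F (eps * l1 N q))"
    unfolding W_def by (rule EJ_fst)
  have eGD: "?E (\<lambda>z. G (eps * W z) * Dz z) = ?Ep (\<lambda>q. G (eps * l1 N q)) * (- eps)"
  proof -
    have "?E (\<lambda>z. G (eps * W z) * Dz z) = ?Ep (\<lambda>q. G (eps * l1 N q)) * measure_pmf.expectation DD (\<lambda>d. d)"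
      unfolding W_def by (rule EJ_indep[OF iGphi, where c=B]) (simp add: DD_bound B_def)
    then show ?thesis using ED by simp
  qed
  have eG'D: "?E (\<lambda>z. G' (eps * W z) * (Dz z)\<^sup>2) = ?Ep (\<lambda>q. G' (eps * l1 N q)) * (2 / l + eps\<^sup>2)"
  proof -
    have "?E (\<lambda>z. G' (eps * W z) * (Dz z)\<^sup>2) = ?Ep (\<lambda>q. G' (eps * l1 N q)) * measure_pmf.expectation DD (\<lambda>d. d\<^sup>2)"
      unfolding W_def
    proof (rule EJ_indep[OF iG'phi, where c="B\<^sup>2"])
      fix d assume "d \<in> set_pmf DD"
      then have "\<bar>d\<bar> \<le> \<bar>B\<bar>" using DD_bound B0 unfolding B_def by simp
      then show "\<bar>d\<^sup>2\<bar> \<le> B\<^sup>2" by (metis abs_le_square_iff abs_power2)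
    qed
    then show ?thesis using ED2 by simp
  qed
  have eD: "?E Dz = - eps"
  proof -
    have "?E (\<lambda>z. (\<lambda>_. 1::real) (fst z) * (\<lambda>d. d) (Dz z)) = ?Ep (\<lambda>_. 1) * measure_pmf.expectation DD (\<lambda>d. d)"
      by (rule EJ_indep[where c=B]) (simp_all add: DD_bound B_def)
    then show ?thesis using ED by (simp add: measure_pmf.prob_space)
  qed
  have eW: "?E Wn = ?E W"
    unfolding Wn_def W_def using EJ_next[of "l1 N"] EJ_fst[of "l1 N"] by simp
  have eU: "?E U = eps"
  proof -
    have "?E U = ?E (\<lambda>z. Wn z - W z - Dz z)"
    proof (rule integral_cong_AE)
      show "AE z in measure_pmf J. U z = Wn z - W z - Dz z"
      proof (rule AE_pmfI)
        fix z assume "z \<in> set_pmf J"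
        show "U z = Wn z - W z - Dz z"
          using l1_next_unused[of "fst z" "fst (snd z)" "snd (snd z)"] unfolding U_def Wn_def W_def by simp
      qed
    qed simp_all
    also have "\<dots> = ?E Wn - ?E W - ?E Dz" using iWn iW iD by simp
    finally show ?thesis using eW eD by simp
  qed
  have eE1: "?E E1 = eps\<^sup>2 * ?Ep (\<lambda>q. G (eps * l1 N q)) - eps\<^sup>2 / 2 * (2 / l + eps\<^sup>2) * ?Ep (\<lambda>q. G' (eps * l1 N q))"
  proof -
    have "?E E1 = ?E (\<lambda>z. F (eps * Wn z)) - ?E (\<lambda>z. F (eps * W z)) - eps * ?E (\<lambda>z. G (eps * W z) * Dz z)
        - eps\<^sup>2 / 2 * ?E (\<lambda>z. G' (eps * W z) * (Dz z)\<^sup>2)"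
      unfolding E1_def using iFY iFX iGD iG'D by (simp add: mult.assoc)
    then show ?thesis unfolding eFY eFX eGD eG'D by (simp add: power2_eq_square algebra_simps)
  qed
  have eBd: "?E Bd = eps\<^sup>2 * ?E (\<lambda>z. Wn z * U z) + eps\<^sup>2 * (SN + B + SN / 2) * eps + 2 * l * eps ^ 3 * (B + SN) ^ 3"
    unfolding Bd_def using iWnU iU eU by (simp add: measure_pmf.prob_space)
  have bE1: "\<bar>?E E1\<bar> \<le> ?E Bd"
  proof -
    have "\<bar>?E E1\<bar> \<le> ?E (\<lambda>z. \<bar>E1 z\<bar>)" by (rule integral_abs_bound)
    also have "\<dots> \<le> ?E Bd"
      by (rule integral_mono_AE) (use iE1 iBd pw in \<open>auto intro!: AE_pmfI\<close>)
    finally show ?thesis .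
  qed
  have stein: "?Ep (\<lambda>q. h (eps * l1 N q)) - Eh l h = ?Ep (\<lambda>q. G' (eps * l1 N q)) / l - ?Ep (\<lambda>q. G (eps * l1 N q))"
  proof -
    have "?Ep (\<lambda>q. h (eps * l1 N q)) = ?Ep (\<lambda>q. G' (eps * l1 N q) / l - G (eps * l1 N q) + Eh l h)"
      by (rule Bochner_Integration.integral_cong) (use stein_eq[OF l h] in \<open>auto simp: G_def G'_def\<close>)
    also have "\<dots> = ?Ep (\<lambda>q. G' (eps * l1 N q)) / l - ?Ep (\<lambda>q. G (eps * l1 N q)) + Eh l h"
      using iGphi iG'phi by (simp add: measure_pmf.prob_space)
    finally show ?thesis by simp
  qed
  have bP: "\<bar>?Ep (\<lambda>q. G' (eps * l1 N q))\<bar> \<le> 1"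
  proof -
    have "\<bar>?Ep (\<lambda>q. G' (eps * l1 N q))\<bar> \<le> ?Ep (\<lambda>q. \<bar>G' (eps * l1 N q)\<bar>)" by (rule integral_abs_bound)
    also have "\<dots> \<le> ?Ep (\<lambda>q. 1)"
      by (rule integral_mono) (use iG'phi in \<open>auto simp: G'_def intro: sg'_bd[OF l h]\<close>)
    finally have "\<bar>?Ep (\<lambda>q. G' (eps * l1 N q))\<bar> \<le> ?Ep (\<lambda>q. 1)" .
    then show ?thesis by (simp add: measure_pmf.prob_space)
  qed
  have eQ: "?E (\<lambda>z. Wn z * U z) = ?E (\<lambda>(q, x, s). l1 N (next_queue N q x s) * l1 N (unused N q x s))"
    unfolding Wn_def U_def by (simp add: case_prod_unfold)
  define R where "R = ?Ep (\<lambda>q. h (eps * l1 N q)) - Eh l h"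
  define M where "M = ?E E1"
  define P where "P = ?Ep (\<lambda>q. G' (eps * l1 N q))"
  define Q where "Q = ?E (\<lambda>z. Wn z * U z)"
  define K1 where "K1 = SN + B + SN / 2 + 2 * l * (real A_max + 2 * SN) ^ 3"
  have BS: "B + SN = real A_max + 2 * SN" unfolding B_def SN_def by simp
  have eqR: "eps\<^sup>2 * R = - M - eps ^ 4 / 2 * P"
    unfolding R_def M_def P_def stein eE1 by (rule alg2) (use l in simp)
  have bM: "\<bar>M\<bar> \<le> eps\<^sup>2 * Q + eps ^ 3 * K1"
  proof -
    have "?E Bd = eps\<^sup>2 * Q + eps ^ 3 * K1"
      unfolding eBd Q_def K1_def BS by (simp add: power2_eq_square power3_eq_cube algebra_simps)
    then show ?thesis using bE1 unfolding M_def by simp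
  qed
  have "eps\<^sup>2 * \<bar>R\<bar> = \<bar>- M - eps ^ 4 / 2 * P\<bar>" unfolding eqR[symmetric] by (simp add: abs_mult)
  also have "\<dots> \<le> \<bar>- M\<bar> + \<bar>eps ^ 4 / 2 * P\<bar>" by (rule abs_triangle_ineq4)
  also have "\<dots> = \<bar>M\<bar> + eps ^ 4 / 2 * \<bar>P\<bar>" by (simp add: abs_mult)
  also have "\<dots> \<le> eps\<^sup>2 * Q + eps ^ 3 * K1 + eps ^ 4 / 2"
    using bM bP eps unfolding P_def by (intro add_mono) (simp_all add: mult_left_le)
  also have "\<dots> = eps\<^sup>2 * (Q + eps * K1 + eps\<^sup>2 / 2)"
    by (simp add: power2_eq_square power3_eq_cube power4_eq_xxxx algebra_simps)
  finally have "\<bar>R\<bar> \<le> Q + eps * K1 + eps\<^sup>2 / 2" using eps by simp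
  also have "eps\<^sup>2 / 2 \<le> eps * (SN / 2)" using epsb eps unfolding SN_def by (simp add: power2_eq_square)
  finally have fin: "\<bar>R\<bar> \<le> Q + (2 * SN + B + 2 * l * (real A_max + 2 * SN) ^ 3) * eps"
    unfolding K1_def by (simp add: algebra_simps)
  show ?thesis using fin unfolding R_def Q_def eQ SN_def B_def .
qed

end

lemma alg_var: "(D2::real) = A2 - 2 * A * S + S2 \<Longrightarrow> Va = A2 - A\<^sup>2 \<Longrightarrow> Vs = S2 - S\<^sup>2 \<Longrightarrow> S = m \<Longrightarrow> A = m - e
   \<Longrightarrow> D2 = Va + Vs + e\<^sup>2"
  by (simp add: power2_eq_square algebra_simps)

theorem theorem3:
  fixes N :: nat
    and serv :: "nat \<Rightarrow> nat pmf"
    and arr :: "real \<Rightarrow> nat pmf"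
    and policy :: "qvec \<Rightarrow> nat \<Rightarrow> qvec pmf"
    and \<pi> :: "real \<Rightarrow> qvec pmf"
    and A_max S_max :: nat
    and c0 \<epsilon>0 C :: real
    and g :: "real \<Rightarrow> real"
  defines "\<mu>\<Sigma> \<equiv> (\<Sum>n<N. measure_pmf.expectation (serv n) real)"
      and "\<nu>2 \<equiv> measure_pmf.variance (Pi_pmf {..<N} 0 serv) (\<lambda>s. real (\<Sum>n<N. s n))"
  assumes N_pos: "N \<ge> 1"
    and serv_bdd: "\<And>n. n < N \<Longrightarrow> set_pmf (serv n) \<subseteq> {..S_max}"
    and arr_bdd: "\<And>\<epsilon>. 0 < \<epsilon> \<Longrightarrow> \<epsilon> < \<mu>\<Sigma> \<Longrightarrow> set_pmf (arr \<epsilon>) \<subseteq> {..A_max}"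
    and arr_zero: "\<And>\<epsilon>. 0 < \<epsilon> \<Longrightarrow> \<epsilon> < \<mu>\<Sigma> \<Longrightarrow> pmf (arr \<epsilon>) 0 > 0"
    and arr_mean: "\<And>\<epsilon>. 0 < \<epsilon> \<Longrightarrow> \<epsilon> < \<mu>\<Sigma> \<Longrightarrow>
                     measure_pmf.expectation (arr \<epsilon>) real = \<mu>\<Sigma> - \<epsilon>"
    and c0_pos: "c0 > 0"
    and var_lb: "\<And>\<epsilon>. 0 < \<epsilon> \<Longrightarrow> \<epsilon> < \<mu>\<Sigma> \<Longrightarrow>
                   measure_pmf.variance (arr \<epsilon>) real + \<nu>2 \<ge> c0"
    and policy_ok: "\<And>q a x. x \<in> set_pmf (policy q a) \<Longrightarrow> (\<Sum>n<N. x n) = a"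
    and thr_stat: "\<And>\<epsilon>. 0 < \<epsilon> \<Longrightarrow> \<epsilon> < \<mu>\<Sigma> \<Longrightarrow> stationary N (arr \<epsilon>) policy serv (\<pi> \<epsilon>)"
    and thr_mom: "\<And>\<epsilon> k. 0 < \<epsilon> \<Longrightarrow> \<epsilon> < \<mu>\<Sigma> \<Longrightarrow>
                   integrable (measure_pmf (\<pi> \<epsilon>)) (\<lambda>q. l1 N q ^ k)"
    and eps0_pos: "\<epsilon>0 > 0"
    and g_nonneg: "\<And>\<epsilon>. 0 < \<epsilon> \<Longrightarrow> \<epsilon> < \<epsilon>0 \<Longrightarrow> g \<epsilon> \<ge> 0"
    and hyp: "\<And>\<epsilon>. 0 < \<epsilon> \<Longrightarrow> \<epsilon> < \<epsilon>0 \<Longrightarrow> \<epsilon> < \<mu>\<Sigma> \<Longrightarrow>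
               measure_pmf.expectation (steady_joint N (arr \<epsilon>) policy serv (\<pi> \<epsilon>))
                 (\<lambda>(q, x, s). l1 N (next_queue N q x s) * l1 N (unused N q x s))
               \<le> C * g \<epsilon>"
  shows "\<exists>C'. \<forall>\<epsilon>. 0 < \<epsilon> \<and> \<epsilon> < \<epsilon>0 \<and> \<epsilon> < \<mu>\<Sigma> \<longrightarrow>
           wasserstein
             (measure_pmf (map_pmf (\<lambda>q. \<epsilon> * l1 N q) (\<pi> \<epsilon>)))
             (density lborel (exponential_density
                (2 / (measure_pmf.variance (arr \<epsilon>) real + \<nu>2))))
           \<le> ereal (C' * max (g \<epsilon>) \<epsilon>)"

proof -
  define SN where "SN = real N * real S_max"
  define B where "B = real A_max + SN"
  define K0 where "K0 = 2 * SN + B + 2 * (2 / c0) * (real A_max + 2 * SN) ^ 3"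
  have SN0: "0 \<le> SN" unfolding SN_def by simp
  have K00: "0 \<le> K0" unfolding K0_def B_def using SN0 c0_pos by simp
  have muS: "\<mu>\<Sigma> \<le> SN"
  proof -
    have "\<mu>\<Sigma> \<le> (\<Sum>n<N. real S_max)" unfolding \<mu>\<Sigma>_def
    proof (rule sum_mono)
      fix n assume n: "n \<in> {..<N}"
      have "measure_pmf.expectation (serv n) real \<le> measure_pmf.expectation (serv n) (\<lambda>_. real S_max)"
      proof -
        have bd: "\<And>y. y \<in> set_pmf (serv n) \<Longrightarrow> y \<le> S_max" using serv_bdd n by auto
        show ?thesis
          by (rule integral_mono_AE) (use bd in \<open>auto intro!: AE_pmfI measure_pmf.integrable_const_bound[where B="real S_max"]\<close>)
      qed
      then show "measure_pmf.expectation (serv n) real \<le> real S_max" by (simp add: measure_pmf.prob_space)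
    qed
    then show ?thesis unfolding SN_def by simp
  qed
  show ?thesis
  proof (intro exI[of _ "max C 0 + K0"] allI impI)
    fix \<epsilon> :: real assume "0 < \<epsilon> \<and> \<epsilon> < \<epsilon>0 \<and> \<epsilon> < \<mu>\<Sigma>"
    then have e0: "0 < \<epsilon>" and e1: "\<epsilon> < \<epsilon>0" and e2: "\<epsilon> < \<mu>\<Sigma>" by auto
    define V where "V = measure_pmf.variance (arr \<epsilon>) real + \<nu>2"
    define l where "l = 2 / V"
    have V: "c0 \<le> V" unfolding V_def using var_lb[OF e0 e2] .
    have l0: "0 < l" unfolding l_def using V c0_pos by simp
    have lc: "l \<le> 2 / c0" unfolding l_def using V c0_pos by (simp add: frac_le)
    show "wasserstein (measure_pmf (map_pmf (\<lambda>q. \<epsilon> * l1 N q) (\<pi> \<epsilon>)))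
             (density lborel (exponential_density (2 / (measure_pmf.variance (arr \<epsilon>) real + \<nu>2))))
           \<le> ereal ((max C 0 + K0) * max (g \<epsilon>) \<epsilon>)"
    proof -
      note ab = arr_bdd[OF e0 e2]
      note st = thr_stat[OF e0 e2]
      note mo = thr_mom[OF e0 e2]
      have pa: "\<forall>q a x. x \<in> set_pmf (policy q a) \<longrightarrow> (\<Sum>n<N. x n) = a" using policy_ok by blast
      have sa: "\<forall>n<N. set_pmf (serv n) \<subseteq> {..S_max}" using serv_bdd by blast
      have ma: "\<forall>k. integrable (measure_pmf (\<pi> \<epsilon>)) (\<lambda>q. l1 N q ^ k)" using mo by blast
      note ctx = sa ab pa st ma
      have ES: "measure_pmf.expectation (Pi_pmf {..<N} 0 serv) (\<lambda>s. real (\<Sum>n<N. s n)) = \<mu>\<Sigma>"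
        unfolding \<mu>\<Sigma>_def by (rule E_PS_S[OF ctx])
      have EA: "measure_pmf.expectation (arr \<epsilon>) real = \<mu>\<Sigma> - \<epsilon>" by (rule arr_mean[OF e0 e2])
      have ED: "measure_pmf.expectation (DD N (arr \<epsilon>) serv) (\<lambda>d. d) = - \<epsilon>"
        using E_DD1[OF ctx] ES EA by simp
      have iA: "integrable (measure_pmf (arr \<epsilon>)) real"
        by (rule int_ar[OF ctx, where c="real A_max"]) (use ab in auto)
      have iA2: "integrable (measure_pmf (arr \<epsilon>)) (\<lambda>a. (real a)\<^sup>2)"
        by (rule int_ar[OF ctx, where c="real A_max ^ 2"]) (use ab in \<open>auto intro!: power_mono\<close>)
      have iS: "integrable (measure_pmf (Pi_pmf {..<N} 0 serv)) (\<lambda>s. real (\<Sum>n<N. s n))"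
        by (rule int_PS[OF ctx, where c="real N * real S_max"]) (simp add: of_nat_sum SS_bound[OF ctx])
      have iS2: "integrable (measure_pmf (Pi_pmf {..<N} 0 serv)) (\<lambda>s. (real (\<Sum>n<N. s n))\<^sup>2)"
      proof (rule int_PS[OF ctx, where c="(real N * real S_max) ^ 2"])
        fix s assume "s \<in> set_pmf (Pi_pmf {..<N} 0 serv)"
        then have "\<bar>real (\<Sum>n<N. s n)\<bar> \<le> \<bar>real N * real S_max\<bar>" using SS_bound[OF ctx, of s] by (simp add: of_nat_sum del: abs_mult_self_eq)
        then show "\<bar>(real (\<Sum>n<N. s n))\<^sup>2\<bar> \<le> (real N * real S_max)\<^sup>2" by (metis abs_le_square_iff abs_power2)
      qed
      have VA: "measure_pmf.variance (arr \<epsilon>) real = measure_pmf.expectation (arr \<epsilon>) (\<lambda>a. (real a)\<^sup>2) - (measure_pmf.expectation (arr \<epsilon>) real)\<^sup>2"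
        by (rule measure_pmf.variance_eq[OF iA iA2])
      have VS: "\<nu>2 = measure_pmf.expectation (Pi_pmf {..<N} 0 serv) (\<lambda>s. (real (\<Sum>n<N. s n))\<^sup>2) - (measure_pmf.expectation (Pi_pmf {..<N} 0 serv) (\<lambda>s. real (\<Sum>n<N. s n)))\<^sup>2"
        unfolding \<nu>2_def by (rule measure_pmf.variance_eq[OF iS iS2])
      have ED2: "measure_pmf.expectation (DD N (arr \<epsilon>) serv) (\<lambda>d. d\<^sup>2) = 2 / l + \<epsilon>\<^sup>2"
      proof -
        have "2 / l = V" unfolding l_def using V c0_pos by simp
        then show ?thesis using alg_var[OF E_DD2[OF ctx] VA VS ES EA] unfolding V_def by simp
      qed
      have epsb: "\<epsilon> \<le> real N * real S_max" using e2 muS unfolding SN_def by simp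
      have hyp': "measure_pmf.expectation (steady_joint N (arr \<epsilon>) policy serv (\<pi> \<epsilon>))
                 (\<lambda>(q, x, s). l1 N (next_queue N q x s) * l1 N (unused N q x s)) \<le> C * g \<epsilon>"
        by (rule hyp[OF e0 e1 e2])
      have g0: "0 \<le> g \<epsilon>" using g_nonneg[OF e0 e1] .
      define Kl where "Kl = 2 * (real N * real S_max) + (real A_max + real N * real S_max)
           + 2 * l * (real A_max + 2 * (real N * real S_max)) ^ 3"
      have KlK0: "Kl \<le> K0"
        unfolding Kl_def K0_def B_def SN_def using lc
        by (intro add_left_mono mult_right_mono mult_left_mono) auto
      have key: "\<bar>measure_pmf.expectation (\<pi> \<epsilon>) (\<lambda>q. h (\<epsilon> * l1 N q)) - Eh l h\<bar> \<le> (max C 0 + K0) * max (g \<epsilon>) \<epsilon>"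
        if h: "lipschitz_on 1 UNIV h" for h
      proof -
        have "\<bar>measure_pmf.expectation (\<pi> \<epsilon>) (\<lambda>q. h (\<epsilon> * l1 N q)) - Eh l h\<bar> \<le> C * g \<epsilon> + Kl * \<epsilon>"
          using main_bound[OF ctx l0 h e0 ED ED2 epsb] hyp' unfolding Kl_def by linarith
        also have "C * g \<epsilon> \<le> max C 0 * max (g \<epsilon>) \<epsilon>"
          using g0 e0 by (intro mult_mono) auto
        also have "Kl * \<epsilon> \<le> K0 * max (g \<epsilon>) \<epsilon>"
          using KlK0 K00 e0 by (intro mult_mono) auto
        finally show ?thesis by (simp add: algebra_simps)
      qed
      have dens: "density lborel (exponential_density (2 / (measure_pmf.variance (arr \<epsilon>) real + \<nu>2))) = expM l"
        unfolding expM_def l_def V_def ..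
      show ?thesis
        unfolding wasserstein_def dens
      proof (rule SUP_least)
        fix h :: "real \<Rightarrow> real" assume "h \<in> {h. lipschitz_on 1 UNIV h}"
        then have h: "lipschitz_on 1 UNIV h" by simp
        show "ereal \<bar>(\<integral>x. h x \<partial>measure_pmf (map_pmf (\<lambda>q. \<epsilon> * l1 N q) (\<pi> \<epsilon>))) - (\<integral>x. h x \<partial>expM l)\<bar>
              \<le> ereal ((max C 0 + K0) * max (g \<epsilon>) \<epsilon>)"
          using key[OF h] by (simp add: Eh_def)
      qed
    qed
  qed
qed

end
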